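(* Let $F$ be a field with $|F|\ge 4$, and let $G$ be a bipartite graph with $\mathcal{I}_F(G)\neq\emptyset$. Then for every positive integer $d$: $\mathcal{I}_F(G\Box Q_d)\neq\emptyset$, $f(G\Box Q_d)=2^{d-2}|V(G)|$, and $f(G\Box Q_d\Box C_{2k})=2^{d}|V(G)|$ for every integer $k\ge 2$.
   Context: All graphs are finite and simple. For a graph $H$ with a perfect matching $M$, a subset $S\subseteq M$ is a forcing set of $M$ if $S$ is contained in no other perfect matching of $H$; the forcing number $f(H,M)$ is the minimum size of a forcing set of $M$, and $f(H)$ is the minimum of $f(H,M)$ over all perfect matchings $M$ of $H$. A weighted adjacency matrix of a graph $G$ over a field $F$ is a matrix over $F$ with rows and columns indexed by $V(G)$ whose $(u,v)$ entry is nonzero iff $u$ and $v$ are adjacent in $G$. A matrix $A$ is involutory if $A^{-1}=A$. $\mathcal{I}_F(G)$ is the set of involutory weighted adjacency matrices of $G$ over $F$. $Q_d$ is the $d$-dimensional hypercube (vertex set $\{0,1\}^d$, two vectors adjacent iff they differ in exactly one coordinate). $C_{2k}$ is the cycle on $2k$ vertices. The Cartesian product $G\Box H$ has vertex set $V(G)\times V(H)$, with $(g_1,h_1)\sim(g_2,h_2)$ iff either $g_1=g_2$ and $h_1h_2\in E(H)$, or $h_1=h_2$ and $g_1g_2\in E(G)$. *)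

theory Defs
  imports Complex_Main
begin

type_synonym 'a graph = "'a set \<times> 'a set set"

definition verts :: "'a graph \<Rightarrow> 'a set" where "verts G = fst G"
definition edges :: "'a graph \<Rightarrow> 'a set set" where "edges G = snd G"

definition simple_graph :: "'a graph \<Rightarrow> bool" where
  "simple_graph G \<longleftrightarrow> finite (verts G) \<and>
     (\<forall>e\<in>edges G. e \<subseteq> verts G \<and> card e = 2)"

definition bipartite :: "'a graph \<Rightarrow> bool" where
  "bipartite G \<longleftrightarrow> (\<exists>X \<subseteq> verts G. \<forall>e\<in>edges G. card (e \<inter> X) = 1)"

definition adjacent :: "'a graph \<Rightarrow> 'a \<Rightarrow> 'a \<Rightarrow> bool" where
  "adjacent G u v \<longleftrightarrow> {u, v} \<in> edges G"

definition weighted_adj :: "'a graph \<Rightarrow> ('a \<Rightarrow> 'a \<Rightarrow> 'f::field) \<Rightarrow> bool" where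
  "weighted_adj G A \<longleftrightarrow>
     (\<forall>u v. (u \<notin> verts G \<or> v \<notin> verts G) \<longrightarrow> A u v = 0) \<and>
     (\<forall>u\<in>verts G. \<forall>v\<in>verts G. A u v \<noteq> 0 \<longleftrightarrow> adjacent G u v)"

definition involutory :: "'a set \<Rightarrow> ('a \<Rightarrow> 'a \<Rightarrow> 'f::field) \<Rightarrow> bool" where
  "involutory V A \<longleftrightarrow>
     (\<forall>u\<in>V. \<forall>v\<in>V. (\<Sum>w\<in>V. A u w * A w v) = (if u = v then 1 else 0))"

definition invol_adj :: "'a graph \<Rightarrow> ('a \<Rightarrow> 'a \<Rightarrow> 'f::field) set" where
  "invol_adj G = {A. weighted_adj G A \<and> involutory (verts G) A}"

definition perfect_matching :: "'a graph \<Rightarrow> 'a set set \<Rightarrow> bool" where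
  "perfect_matching H M \<longleftrightarrow> M \<subseteq> edges H \<and>
     (\<forall>v\<in>verts H. \<exists>!e. e \<in> M \<and> v \<in> e)"

definition forcing_set :: "'a graph \<Rightarrow> 'a set set \<Rightarrow> 'a set set \<Rightarrow> bool" where
  "forcing_set H M S \<longleftrightarrow> S \<subseteq> M \<and>
     (\<forall>M'. perfect_matching H M' \<and> S \<subseteq> M' \<longrightarrow> M' = M)"

definition forcing_number_of :: "'a graph \<Rightarrow> 'a set set \<Rightarrow> nat" where
  "forcing_number_of H M = (LEAST n. \<exists>S. forcing_set H M S \<and> card S = n)"

definition forcing_number :: "'a graph \<Rightarrow> nat" where
  "forcing_number H = (LEAST n. \<exists>M. perfect_matching H M \<and> forcing_number_of H M = n)"

definition cart :: "'a graph \<Rightarrow> 'b graph \<Rightarrow> ('a \<times> 'b) graph" where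
  "cart G H = (verts G \<times> verts H,
     {{(g, h1), (g, h2)} | g h1 h2. g \<in> verts G \<and> {h1, h2} \<in> edges H} \<union>
     {{(g1, h), (g2, h)} | g1 g2 h. h \<in> verts H \<and> {g1, g2} \<in> edges G})"

definition hypercube :: "nat \<Rightarrow> bool list graph" where
  "hypercube d = ({xs. length xs = d},
     {{xs, ys} | xs ys. length xs = d \<and> length ys = d \<and>
        card {i. i < d \<and> xs ! i \<noteq> ys ! i} = 1})"

definition cycle :: "nat \<Rightarrow> nat graph" where
  "cycle n = ({0..<n}, {{i, (i + 1) mod n} | i. i < n})"

end

theory Submission
  imports Defs
begin


lemma indep_card_le:
  fixes f :: "'i \<Rightarrow> 'v \<Rightarrow> 'f::field"
  assumes "finite V" "finite I"
    and "\<forall>a. (\<forall>v\<in>V. (\<Sum>i\<in>I. a i * f i v) = 0) \<longrightarrow> (\<forall>i\<in>I. a i = 0)"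
  shows "card I \<le> card V"
  using assms
proof (induction V arbitrary: I f rule: finite_induct)
  case empty
  have "\<forall>i\<in>I. (1::'f) = 0" using empty.prems(2)[rule_format, of "\<lambda>_. 1"] by blast
  then have "I = {}" by auto
  then show ?case by simp
next
  case (insert v V')
  show ?case
  proof (cases "\<forall>i\<in>I. f i v = 0")
    case True
    have "\<forall>a. (\<forall>x\<in>V'. (\<Sum>i\<in>I. a i * f i x) = 0) \<longrightarrow> (\<forall>i\<in>I. a i = 0)"
    proof (intro allI impI)
      fix a assume h: "\<forall>x\<in>V'. (\<Sum>i\<in>I. a i * f i x) = 0"
      have "\<forall>x\<in>insert v V'. (\<Sum>i\<in>I. a i * f i x) = 0"
        using h True by auto
      then show "\<forall>i\<in>I. a i = 0" using insert.prems(2) by blast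
    qed
    then have "card I \<le> card V'" using insert.IH insert.prems(1) by blast
    then show ?thesis using insert.hyps by simp
  next
    case False
    then obtain i0 where i0: "i0 \<in> I" "f i0 v \<noteq> 0" by blast
    define g where "g i x = f i x - (f i v / f i0 v) * f i0 x" for i x
    define I' where "I' = I - {i0}"
    have "\<forall>a. (\<forall>x\<in>V'. (\<Sum>i\<in>I'. a i * g i x) = 0) \<longrightarrow> (\<forall>i\<in>I'. a i = 0)"
    proof (intro allI impI)
      fix a assume h: "\<forall>x\<in>V'. (\<Sum>i\<in>I'. a i * g i x) = 0"
      define c where "c = (\<Sum>j\<in>I'. a j * f j v) / f i0 v"
      define a' where "a' i = (if i = i0 then - c else a i)" for i
      have key: "(\<Sum>i\<in>I. a' i * f i x) = (\<Sum>i\<in>I'. a i * g i x)" for x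
      proof -
        have "(\<Sum>i\<in>I. a' i * f i x) = a' i0 * f i0 x + (\<Sum>i\<in>I'. a' i * f i x)"
          unfolding I'_def using i0 insert.prems(1) by (simp add: sum.remove)
        also have "(\<Sum>i\<in>I'. a' i * f i x) = (\<Sum>i\<in>I'. a i * f i x)"
          unfolding a'_def I'_def by (rule sum.cong) auto
        also have "(\<Sum>i\<in>I'. a i * g i x) = (\<Sum>i\<in>I'. a i * f i x) - (\<Sum>i\<in>I'. a i * f i v) / f i0 v * f i0 x"
          unfolding g_def by (simp add: algebra_simps sum_subtractf sum_distrib_right sum_divide_distrib sum_distrib_left)
        ultimately show ?thesis unfolding a'_def c_def by simp
      qed
      have gv: "g i v = 0" for i unfolding g_def using i0 by simp
      have "\<forall>x\<in>insert v V'. (\<Sum>i\<in>I. a' i * f i x) = 0"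
        using h key gv by auto
      then have z: "\<forall>i\<in>I. a' i = 0" using insert.prems(2) by blast
      show "\<forall>i\<in>I'. a i = 0"
      proof
        fix i assume "i \<in> I'"
        then have "i \<in> I" "i \<noteq> i0" unfolding I'_def by auto
        then show "a i = 0" using z unfolding a'_def by force
      qed
    qed
    then have "card I' \<le> card V'" using insert.IH insert.prems(1) I'_def by blast
    then show ?thesis using insert.hyps i0 insert.prems(1) unfolding I'_def
      by (simp add: card_Diff_singleton)
  qed
qed



definition pm_on :: "'v set set \<Rightarrow> 'v set \<Rightarrow> 'v set set \<Rightarrow> bool" where
  "pm_on E W Mw \<longleftrightarrow> Mw \<subseteq> E \<and> (\<forall>e\<in>Mw. e \<subseteq> W) \<and> (\<forall>v\<in>W. \<exists>!e. e \<in> Mw \<and> v \<in> e)"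

lemma pm_onD: assumes "pm_on E W Mw"
  shows "Mw \<subseteq> E" "\<And>e. e \<in> Mw \<Longrightarrow> e \<subseteq> W" "\<And>v. v \<in> W \<Longrightarrow> \<exists>!e. e \<in> Mw \<and> v \<in> e"
  using assms unfolding pm_on_def by auto

lemma card2_elem:
  assumes "card e = 2" "w \<in> e"
  shows "\<exists>u. u \<noteq> w \<and> e = {w, u}"
proof -
  from assms(1) obtain a b where ab: "e = {a, b}" "a \<noteq> b" unfolding card_2_iff by blast
  then show ?thesis using assms(2) by auto
qed

definition mate :: "'v set set \<Rightarrow> 'v \<Rightarrow> 'v" where
  "mate Mw w = (THE u. {w, u} \<in> Mw)"

lemma mate_props:
  assumes pm: "pm_on E W Mw" and E2: "\<forall>e\<in>E. card e = 2" and w: "w \<in> W"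
  shows "{w, mate Mw w} \<in> Mw" "mate Mw w \<in> W" "mate Mw w \<noteq> w"
    "\<And>e. e \<in> Mw \<Longrightarrow> w \<in> e \<Longrightarrow> e = {w, mate Mw w}"
    "mate Mw (mate Mw w) = w"
proof -
  obtain e where e: "e \<in> Mw" "w \<in> e" and eu: "\<And>e'. e' \<in> Mw \<Longrightarrow> w \<in> e' \<Longrightarrow> e' = e"
    using pm w unfolding pm_on_def by metis
  have "card e = 2" using e pm E2 unfolding pm_on_def by blast
  then obtain u where u: "u \<noteq> w" "e = {w, u}" using card2_elem e(2) by metis
  have uniq: "{w, u'} \<in> Mw \<Longrightarrow> u' = u" for u'
    using eu[of "{w,u'}"] u by (auto simp: doubleton_eq_iff)
  have m: "mate Mw w = u" unfolding mate_def
  proof (rule the_equality)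
    show "{w,u} \<in> Mw" using e u by simp
  next
    fix u' assume "{w,u'} \<in> Mw" then show "u' = u" by (rule uniq)
  qed
  show 1: "{w, mate Mw w} \<in> Mw" using m e u by simp
  show "mate Mw w \<in> W" using m e u pm unfolding pm_on_def by blast
  show "mate Mw w \<noteq> w" using m u by simp
  show "\<And>e'. e' \<in> Mw \<Longrightarrow> w \<in> e' \<Longrightarrow> e' = {w, mate Mw w}" using eu e m u by simp
  have uW: "u \<in> W" using e u pm unfolding pm_on_def by blast
  obtain e2 where e2: "e2 \<in> Mw" "u \<in> e2" and eu2: "\<And>e'. e' \<in> Mw \<Longrightarrow> u \<in> e' \<Longrightarrow> e' = e2"
    using pm uW unfolding pm_on_def by metis
  have "e2 = e" using eu2[of e] e u by simp
  have uniq2: "{u, w'} \<in> Mw \<Longrightarrow> w' = w" for w'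
    using eu2[of "{u,w'}"] \<open>e2 = e\<close> u by (auto simp: doubleton_eq_iff)
  have "mate Mw u = w" unfolding mate_def
  proof (rule the_equality)
    show "{u,w} \<in> Mw" using e u by (simp add: insert_commute)
  next
    fix u' assume "{u,u'} \<in> Mw" then show "u' = w" by (rule uniq2)
  qed
  then show "mate Mw (mate Mw w) = w" using m by simp
qed

lemma periodic_subset:
  assumes "finite D" "D \<noteq> {}" "f ` D \<subseteq> D"
  shows "\<exists>C. C \<subseteq> D \<and> C \<noteq> {} \<and> f ` C = C"
proof -
  define P where "P C \<longleftrightarrow> C \<subseteq> D \<and> C \<noteq> {} \<and> f ` C \<subseteq> C" for C
  have "P D" using assms unfolding P_def by simp
  then obtain C where C: "P C" and min: "\<And>C'. P C' \<Longrightarrow> card C \<le> card C'"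
    using ex_has_least_nat[of P D card] by blast
  have fin: "finite C" using C assms(1) unfolding P_def by (meson finite_subset)
  have "P (f ` C)" using C unfolding P_def by blast
  then have "card C \<le> card (f ` C)" by (rule min)
  then have "f ` C = C" using C fin unfolding P_def by (meson card_subset_eq card_image_le antisym)
  then show ?thesis using C unfolding P_def by blast
qed

lemma deg1:
  fixes col :: "'v \<Rightarrow> bool"
  assumes fin: "finite W" and E2: "\<forall>e\<in>E. card e = 2"
    and col: "\<forall>u v. {u,v} \<in> E \<longrightarrow> col u \<noteq> col v"
    and pm: "pm_on E W Mw" and uq: "\<forall>M'. pm_on E W M' \<longrightarrow> M' = Mw" and ne: "W \<noteq> {}"
  shows "\<exists>w\<in>W. \<forall>u'\<in>W. {w,u'} \<in> E \<longrightarrow> u' = mate Mw w"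
proof (rule ccontr)
  assume "\<not> ?thesis"
  then have nd: "\<forall>w\<in>W. \<exists>u'. u'\<in>W \<and> {w,u'}\<in>E \<and> u' \<noteq> mate Mw w" by blast
  note mp = mate_props[OF pm E2]
  obtain w0 where w0: "w0 \<in> W" using ne by blast
  define D where "D = {w\<in>W. col w = col w0}"
  define y where "y w = (SOME u'. u'\<in>W \<and> {w,u'}\<in>E \<and> u' \<noteq> mate Mw w)" for w
  have y: "y w \<in> W" "{w, y w} \<in> E" "y w \<noteq> mate Mw w" if "w \<in> W" for w
    using someI_ex[OF nd[rule_format, OF that]] unfolding y_def by blast+
  define f where "f w = mate Mw (y w)" for w
  have ME: "Mw \<subseteq> E" using pm unfolding pm_on_def by blast
  have colm: "col (mate Mw w) \<noteq> col w" if "w \<in> W" for w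
    using col mp(1)[OF that] ME by blast
  have fD: "f w \<in> D" if "w \<in> D" for w
  proof -
    have wW: "w \<in> W" using that D_def by simp
    have "col (y w) \<noteq> col w" using col y(2)[OF wW] by blast
    moreover have "col (f w) \<noteq> col (y w)" unfolding f_def using colm y(1)[OF wW] by blast
    ultimately have "col (f w) = col w" by blast
    then show ?thesis using that mp(2)[OF y(1)[OF wW]] unfolding D_def f_def by simp
  qed
  have "finite D" "D \<noteq> {}" using fin w0 unfolding D_def by auto
  then obtain C where C: "C \<subseteq> D" "C \<noteq> {}" "f ` C = C"
    using periodic_subset[of D f] fD by blast
  have finC: "finite C" using C(1) \<open>finite D\<close> finite_subset by blast
  have injC: "inj_on f C" using C(3) finC by (simp add: eq_card_imp_inj_on)
  have CW: "x \<in> W" and Ccol: "col x = col w0" if "x \<in> C" for x using C(1) that D_def by auto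
  have yf: "y x = mate Mw (f x)" if "x \<in> W" for x
    unfolding f_def using mp(5)[OF y(1)[OF that]] by simp
  define R where "R = (\<lambda>x. {x, mate Mw x}) ` C"
  define Mn where "Mn = (\<lambda>x. {x, y x}) ` C"
  define M' where "M' = (Mw - R) \<union> Mn"
  have "pm_on E W M'"
    unfolding pm_on_def
  proof (intro conjI ballI)
    show "M' \<subseteq> E" unfolding M'_def Mn_def using ME y CW by auto
  next
    fix e assume "e \<in> M'"
    then show "e \<subseteq> W" unfolding M'_def Mn_def using pm y CW unfolding pm_on_def by auto
  next
    fix v assume vW: "v \<in> W"
    show "\<exists>!e. e \<in> M' \<and> v \<in> e"
    proof (cases "v \<in> C")
      case True
      show ?thesis
      proof (rule ex1I[of _ "{v, y v}"])
        show "{v, y v} \<in> M' \<and> v \<in> {v, y v}" unfolding M'_def Mn_def using True by auto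
      next
        fix e assume e: "e \<in> M' \<and> v \<in> e"
        show "e = {v, y v}"
        proof (cases "e \<in> Mn")
          case True
          then obtain x where x: "x \<in> C" "e = {x, y x}" unfolding Mn_def by blast
          have "v \<noteq> y x"
          proof
            assume "v = y x"
            then have "col v \<noteq> col x" using col y(2)[OF CW[OF x(1)]] by metis
            then show False using Ccol x(1) Ccol \<open>v \<in> C\<close> by simp
          qed
          then have "v = x" using e x by auto
          then show ?thesis using x by simp
        next
          case False
          then have "e \<in> Mw" "e \<notin> R" using e unfolding M'_def by auto
          then have "e = {v, mate Mw v}" using mp(4)[OF vW] e by blast
          then have "e \<in> R" unfolding R_def using \<open>v \<in> C\<close> by blast
          then show ?thesis using \<open>e \<notin> R\<close> by blast
        qed
      qed
    next
      case vC: False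
      show ?thesis
      proof (cases "v \<in> mate Mw ` C")
        case True
        then obtain x0 where x0: "x0 \<in> C" "v = mate Mw x0" by blast
        then obtain x1 where x1: "x1 \<in> C" "x0 = f x1" using C(3) by (metis imageE)
        have yx1: "y x1 = v" using yf[OF CW[OF x1(1)]] x0 x1 by simp
        show ?thesis
        proof (rule ex1I[of _ "{x1, y x1}"])
          show "{x1, y x1} \<in> M' \<and> v \<in> {x1, y x1}" unfolding M'_def Mn_def using x1 yx1 by auto
        next
          fix e assume e: "e \<in> M' \<and> v \<in> e"
          show "e = {x1, y x1}"
          proof (cases "e \<in> Mn")
            case True
            then obtain x where x: "x \<in> C" "e = {x, y x}" unfolding Mn_def by blast
            have "v \<noteq> x" using vC x by blast
            then have "v = y x" using e x by auto
            then have "mate Mw (f x) = mate Mw (f x1)"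
              using yf[OF CW[OF x(1)]] yf[OF CW[OF x1(1)]] yx1 by simp
            then have "mate Mw (mate Mw (f x)) = mate Mw (mate Mw (f x1))" by simp
            moreover have "f x \<in> W" "f x1 \<in> W" using C(3) x(1) x1(1) CW by blast+
            ultimately have "f x = f x1" using mp(5) by simp
            then have "x = x1" using injC x(1) x1(1) by (meson inj_onD)
            then show ?thesis using x by simp
          next
            case False
            then have "e \<in> Mw" "e \<notin> R" using e unfolding M'_def by auto
            then have "e = {v, mate Mw v}" using mp(4)[OF vW] e by blast
            also have "\<dots> = {x0, mate Mw x0}" using x0 mp(5)[OF CW[OF x0(1)]] by auto
            finally have "e \<in> R" unfolding R_def using x0(1) by blast
            then show ?thesis using \<open>e \<notin> R\<close> by blast
          qed
        qed
      next
        case vmC: False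
        show ?thesis
        proof (rule ex1I[of _ "{v, mate Mw v}"])
          have "{v, mate Mw v} \<notin> R"
          proof
            assume "{v, mate Mw v} \<in> R"
            then obtain x where x: "x \<in> C" "{v, mate Mw v} = {x, mate Mw x}" unfolding R_def by blast
            then have "v = x \<or> v = mate Mw x" by (metis insertI1 insert_iff empty_iff)
            then show False using vC vmC x(1) by blast
          qed
          then show "{v, mate Mw v} \<in> M' \<and> v \<in> {v, mate Mw v}"
            unfolding M'_def using mp(1)[OF vW] by blast
        next
          fix e assume e: "e \<in> M' \<and> v \<in> e"
          show "e = {v, mate Mw v}"
          proof (cases "e \<in> Mn")
            case True
            then obtain x where x: "x \<in> C" "e = {x, y x}" unfolding Mn_def by blast
            have "v \<noteq> x" using vC x by blast
            then have "v = y x" using e x by auto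
            then have "v = mate Mw (f x)" using yf[OF CW[OF x(1)]] by simp
            moreover have "f x \<in> C" using C(3) x(1) by blast
            ultimately show ?thesis using vmC by blast
          next
            case False
            then have "e \<in> Mw" using e unfolding M'_def by auto
            then show ?thesis using mp(4)[OF vW] e by blast
          qed
        qed
      qed
    qed
  qed
  then have "M' = Mw" using uq by blast
  obtain x where x: "x \<in> C" using C(2) by blast
  have "{x, y x} \<in> Mw" using \<open>M' = Mw\<close> x unfolding M'_def Mn_def by blast
  then have "{x, y x} = {x, mate Mw x}" using mp(4)[OF CW[OF x]] by blast
  then have "y x = mate Mw x" using mp(3)[OF CW[OF x]] y(3)[OF CW[OF x]]
    by (metis doubleton_eq_iff)
  then show False using y(3)[OF CW[OF x]] by simp
qed

lemma pm_remove_edge: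
  assumes pm: "pm_on E W Mw" and E2: "\<forall>e\<in>E. card e = 2" and wW: "w \<in> W"
    and uq: "\<forall>M'. pm_on E W M' \<longrightarrow> M' = Mw"
  defines "u \<equiv> mate Mw w"
  shows "pm_on E (W - {w, u}) (Mw - {{w, u}})"
    "\<forall>M'. pm_on E (W - {w, u}) M' \<longrightarrow> M' = Mw - {{w, u}}"
proof -
  note mp = mate_props[OF pm E2]
  have uW: "u \<in> W" and wu: "{w,u} \<in> Mw" and uw: "u \<noteq> w" using mp(1-3)[OF wW] unfolding u_def by auto
  have mu: "mate Mw u = w" using mp(5)[OF wW] u_def by simp
  show "pm_on E (W - {w, u}) (Mw - {{w, u}})"
    unfolding pm_on_def
  proof (intro conjI ballI)
    show "Mw - {{w, u}} \<subseteq> E" using pm unfolding pm_on_def by blast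
  next
    fix e assume e: "e \<in> Mw - {{w, u}}"
    have "w \<notin> e" using mp(4)[OF wW] e u_def by blast
    moreover have "u \<notin> e" using mp(4)[OF uW] e mu by (auto simp: insert_commute)
    moreover have "e \<subseteq> W" using e pm unfolding pm_on_def by blast
    ultimately show "e \<subseteq> W - {w, u}" by blast
  next
    fix v assume v: "v \<in> W - {w, u}"
    have vW: "v \<in> W" using v by simp
    show "\<exists>!e. e \<in> Mw - {{w, u}} \<and> v \<in> e"
    proof (rule ex1I[of _ "{v, mate Mw v}"])
      show "{v, mate Mw v} \<in> Mw - {{w, u}} \<and> v \<in> {v, mate Mw v}"
        using mp(1)[OF vW] v by (auto simp: doubleton_eq_iff)
    next
      fix e assume "e \<in> Mw - {{w, u}} \<and> v \<in> e"
      then show "e = {v, mate Mw v}" using mp(4)[OF vW] by blast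
    qed
  qed
  show "\<forall>M'. pm_on E (W - {w, u}) M' \<longrightarrow> M' = Mw - {{w, u}}"
  proof (intro allI impI)
    fix M' assume pm': "pm_on E (W - {w, u}) M'"
    have nin: "{w,u} \<notin> M'" using pm_onD(2)[OF pm'] by blast
    have "pm_on E W (insert {w,u} M')"
      unfolding pm_on_def
    proof (intro conjI ballI)
      show "insert {w, u} M' \<subseteq> E" using pm_onD(1)[OF pm] pm_onD(1)[OF pm'] wu by blast
    next
      fix e assume "e \<in> insert {w, u} M'"
      then show "e \<subseteq> W" using pm_onD(2)[OF pm'] uW wW by blast
    next
      fix v assume vW: "v \<in> W"
      show "\<exists>!e. e \<in> insert {w, u} M' \<and> v \<in> e"
      proof (cases "v \<in> {w,u}")
        case True
        show ?thesis
        proof (rule ex1I[of _ "{w,u}"])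
          show "{w, u} \<in> insert {w, u} M' \<and> v \<in> {w, u}" using True by simp
        next
          fix e assume e: "e \<in> insert {w, u} M' \<and> v \<in> e"
          have "e \<notin> M'"
          proof
            assume "e \<in> M'"
            then have "e \<subseteq> W - {w,u}" using pm_onD(2)[OF pm'] by blast
            then show False using e True by blast
          qed
          then show "e = {w,u}" using e by blast
        qed
      next
        case False
        then have v': "v \<in> W - {w,u}" using vW by blast
        then obtain e where e: "e \<in> M'" "v \<in> e" and eu: "\<And>e'. e' \<in> M' \<Longrightarrow> v \<in> e' \<Longrightarrow> e' = e"
          using pm_onD(3)[OF pm'] by metis
        show ?thesis
        proof (rule ex1I[of _ e])
          show "e \<in> insert {w, u} M' \<and> v \<in> e" using e by blast
        next
          fix e' assume "e' \<in> insert {w, u} M' \<and> v \<in> e'"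
          then show "e' = e" using eu False by blast
        qed
      qed
    qed
    then have "insert {w,u} M' = Mw" using uq by blast
    then show "M' = Mw - {{w, u}}" using nin by blast
  qed
qed

lemma pm_inj:
  fixes N :: "'v \<Rightarrow> 'v \<Rightarrow> 'f::field" and col :: "'v \<Rightarrow> bool"
  assumes E2: "\<forall>e\<in>E. card e = 2"
    and col: "\<forall>u v. {u,v} \<in> E \<longrightarrow> col u \<noteq> col v"
    and Nadj: "\<forall>u\<in>W. \<forall>v\<in>W. N u v \<noteq> 0 \<longleftrightarrow> {u,v} \<in> E"
    and fin: "finite W" and pm: "pm_on E W Mw" and uq: "\<forall>M'. pm_on E W M' \<longrightarrow> M' = Mw"
  shows "\<forall>a. (\<forall>w'\<in>W. (\<Sum>w\<in>W. N w' w * a w) = 0) \<longrightarrow> (\<forall>w\<in>W. a w = 0)"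
  using Nadj fin pm uq
proof (induction "card W" arbitrary: W Mw rule: less_induct)
  case less
  show ?case
  proof (cases "W = {}")
    case True then show ?thesis by simp
  next
    case False
    note mp = mate_props[OF less.prems(3) E2]
    obtain w where wW: "w \<in> W" and wd: "\<forall>u'\<in>W. {w,u'} \<in> E \<longrightarrow> u' = mate Mw w"
      using deg1[OF less.prems(2) E2 col less.prems(3) less.prems(4) False] by blast
    define u where "u = mate Mw w"
    have uW: "u \<in> W" and wu: "{w,u} \<in> Mw" and uw: "u \<noteq> w" using mp(1-3)[OF wW] unfolding u_def by auto
    have ME: "Mw \<subseteq> E" using less.prems(3) unfolding pm_on_def by blast
    define W' where "W' = W - {w, u}"
    have pm': "pm_on E W' (Mw - {{w, u}})"
      using pm_remove_edge(1)[OF less.prems(3) E2 wW less.prems(4)] unfolding W'_def u_def .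
    have uq': "\<forall>M'. pm_on E W' M' \<longrightarrow> M' = Mw - {{w, u}}"
      using pm_remove_edge(2)[OF less.prems(3) E2 wW less.prems(4)] unfolding W'_def u_def .
    have "W' \<subset> W" unfolding W'_def using wW by blast
    then have cardlt: "card W' < card W" using less.prems(2) by (simp add: psubset_card_mono)
    have IH: "\<forall>a. (\<forall>w'\<in>W'. (\<Sum>w\<in>W'. N w' w * a w) = 0) \<longrightarrow> (\<forall>w\<in>W'. a w = 0)"
      using less.hyps[OF cardlt _ _ pm' uq'] less.prems(1,2) unfolding W'_def by auto
    have Wdec: "W = insert w (insert u W')" "w \<notin> insert u W'" "u \<notin> W'"
      unfolding W'_def using wW uW uw by auto
    have finW': "finite W'" using less.prems(2) unfolding W'_def by simp
    have noloop: "{x, x} \<notin> E" for x using E2 by force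
    show ?thesis
    proof (intro allI impI)
      fix a assume h: "\<forall>w'\<in>W. (\<Sum>x\<in>W. N w' x * a x) = 0"
      have sumdec: "(\<Sum>x\<in>W. N r x * a x) = N r w * a w + N r u * a u + (\<Sum>x\<in>W'. N r x * a x)" for r
        using Wdec finW' by simp
      have "N w x = 0" if "x \<in> W'" for x
      proof (rule ccontr)
        assume "N w x \<noteq> 0"
        then have "{w,x} \<in> E" using less.prems(1) wW that Wdec by blast
        then have "x = u" using wd that Wdec u_def by blast
        then show False using that Wdec by blast
      qed
      then have "(\<Sum>x\<in>W'. N w x * a x) = 0" by simp
      moreover have "N w w = 0" using less.prems(1) wW noloop by blast
      ultimately have "N w u * a u = 0" using h wW sumdec[of w] by simp
      moreover have "N w u \<noteq> 0" using less.prems(1) wW uW wu ME by blast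
      ultimately have au: "a u = 0" by simp
      have "\<forall>w'\<in>W'. (\<Sum>x\<in>W'. N w' x * a x) = 0"
      proof
        fix w' assume w': "w' \<in> W'"
        have "N w' w = 0"
        proof (rule ccontr)
          assume "N w' w \<noteq> 0"
          then have "{w',w} \<in> E" using less.prems(1) wW w' Wdec by blast
          then have "w' = u" using wd w' Wdec u_def by (simp add: insert_commute)
          then show False using w' Wdec by blast
        qed
        then show "(\<Sum>x\<in>W'. N w' x * a x) = 0" using h w' Wdec sumdec[of w'] au by simp
      qed
      then have aW': "\<forall>x\<in>W'. a x = 0" using IH by blast
      then have "(\<Sum>x\<in>W'. N u x * a x) = 0" by simp
      then have "N u w * a w = 0" using h uW sumdec[of u] au by simp
      moreover have "N u w \<noteq> 0" using less.prems(1) wW uW wu ME by (auto simp: insert_commute)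
      ultimately have "a w = 0" by simp
      then show "\<forall>x\<in>W. a x = 0" using au aW' Wdec by blast
    qed
  qed
qed



lemma simple_graphD:
  assumes "simple_graph H"
  shows "finite (verts H)" "\<And>e. e \<in> edges H \<Longrightarrow> e \<subseteq> verts H" "\<And>e. e \<in> edges H \<Longrightarrow> card e = 2"
  using assms unfolding simple_graph_def by auto

lemma pmD:
  assumes "perfect_matching H M"
  shows "M \<subseteq> edges H" "\<And>v. v \<in> verts H \<Longrightarrow> \<exists>!e. e \<in> M \<and> v \<in> e"
  using assms unfolding perfect_matching_def by auto

lemma forcing_lower:
  fixes H :: "'v graph" and N :: "'v \<Rightarrow> 'v \<Rightarrow> 'f::field" and \<kappa> :: "'z \<Rightarrow> 'v \<Rightarrow> 'f"
    and col :: "'v \<Rightarrow> bool"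
  assumes sg: "simple_graph H"
    and col: "\<forall>u v. {u,v} \<in> edges H \<longrightarrow> col u \<noteq> col v"
    and wadj: "weighted_adj H N"
    and finZ: "finite Z"
    and kern: "\<forall>z\<in>Z. \<forall>v\<in>verts H. (\<Sum>u\<in>verts H. N v u * \<kappa> z u) = 0"
    and indep: "\<forall>b. (\<forall>v\<in>verts H. (\<Sum>z\<in>Z. b z * \<kappa> z v) = 0) \<longrightarrow> (\<forall>z\<in>Z. b z = 0)"
    and pm: "perfect_matching H M" and fs: "forcing_set H M S"
  shows "card Z \<le> 2 * card S"
proof -
  define V where "V = verts H"
  define E where "E = edges H"
  have finV: "finite V" using simple_graphD(1)[OF sg] V_def by simp
  have E2: "\<forall>e\<in>E. card e = 2" using simple_graphD(3)[OF sg] E_def by blast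
  have EV: "e \<subseteq> V" if "e \<in> E" for e using simple_graphD(2)[OF sg] that E_def V_def by blast
  have ME: "M \<subseteq> E" using pmD(1)[OF pm] E_def by simp
  have SM: "S \<subseteq> M" using fs unfolding forcing_set_def by blast
  have Muniq: "e = e'" if "e \<in> M" "e' \<in> M" "v \<in> e" "v \<in> e'" for e e' v
  proof -
    have "v \<in> V" using that ME EV by blast
    then show ?thesis using pmD(2)[OF pm, of v] that V_def by blast
  qed
  have "E \<subseteq> Pow V" using EV by blast
  then have finE: "finite E" using finV finite_subset by blast
  have finS: "finite S" using finite_subset[OF subset_trans[OF SM ME] finE] .
  define U where "U = \<Union>S"
  have cardU: "card U = 2 * card S"
  proof -
    have "pairwise disjnt S"
      unfolding pairwise_def disjnt_def using SM Muniq by blast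
    moreover have "finite A" if "A \<in> S" for A
    proof -
      have "card A = 2" using that SM ME E2 by blast
      then show ?thesis by (intro card_ge_0_finite) simp
    qed
    ultimately have "card U = sum card S" unfolding U_def by (rule card_Union_disjoint)
    also have "\<dots> = sum (\<lambda>_. 2) S" using SM ME E2 by (intro sum.cong) auto
    finally show ?thesis by simp
  qed
  have UV: "U \<subseteq> V" unfolding U_def using SM ME EV by blast
  define W where "W = V - U"
  have finW: "finite W" using finV W_def by simp
  have cardW: "card W = card V - card U" unfolding W_def using UV finV by (simp add: card_Diff_subset finite_subset)
  have pmW: "pm_on E W (M - S)"
    unfolding pm_on_def
  proof (intro conjI ballI)
    show "M - S \<subseteq> E" using ME by blast
  next
    fix e assume e: "e \<in> M - S"
    have "e \<inter> U = {}"
    proof (rule ccontr)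
      assume "e \<inter> U \<noteq> {}"
      then obtain v e' where "v \<in> e" "e' \<in> S" "v \<in> e'" unfolding U_def by blast
      then have "e = e'" using Muniq e SM by blast
      then show False using e \<open>e' \<in> S\<close> by blast
    qed
    then show "e \<subseteq> W" using e ME EV unfolding W_def by blast
  next
    fix v assume v: "v \<in> W"
    then have vV: "v \<in> verts H" unfolding W_def V_def by blast
    obtain e where e: "e \<in> M" "v \<in> e" using pmD(2)[OF pm vV] by blast
    have "e \<notin> S" using e v unfolding W_def U_def by blast
    show "\<exists>!e. e \<in> M - S \<and> v \<in> e"
      using e \<open>e \<notin> S\<close> Muniq by blast
  qed
  have uqW: "\<forall>M'. pm_on E W M' \<longrightarrow> M' = M - S"
  proof (intro allI impI)
    fix M' assume pm': "pm_on E W M'"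
    note p' = pm_onD[OF pm']
    have "perfect_matching H (M' \<union> S)"
      unfolding perfect_matching_def
    proof (intro conjI ballI)
      show "M' \<union> S \<subseteq> edges H" using p'(1) SM ME E_def by blast
    next
      fix v assume vV: "v \<in> verts H"
      show "\<exists>!e. e \<in> M' \<union> S \<and> v \<in> e"
      proof (cases "v \<in> U")
        case True
        then obtain e where e: "e \<in> S" "v \<in> e" unfolding U_def by blast
        show ?thesis
        proof (rule ex1I[of _ e])
          show "e \<in> M' \<union> S \<and> v \<in> e" using e by blast
        next
          fix e' assume e': "e' \<in> M' \<union> S \<and> v \<in> e'"
          have "e' \<notin> M'" using p'(2) True e' unfolding W_def by blast
          then show "e' = e" using e' e Muniq SM by blast
        qed
      next
        case False
        then have vW: "v \<in> W" using vV unfolding W_def V_def by blast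
        then obtain e where e: "e \<in> M'" "v \<in> e" and eu: "\<And>e'. e' \<in> M' \<Longrightarrow> v \<in> e' \<Longrightarrow> e' = e"
          using p'(3) by metis
        show ?thesis
        proof (rule ex1I[of _ e])
          show "e \<in> M' \<union> S \<and> v \<in> e" using e by blast
        next
          fix e' assume e': "e' \<in> M' \<union> S \<and> v \<in> e'"
          have "e' \<notin> S" using e' False unfolding U_def by blast
          then show "e' = e" using e' eu by blast
        qed
      qed
    qed
    moreover have "S \<subseteq> M' \<union> S" by blast
    ultimately have "M' \<union> S = M" using fs unfolding forcing_set_def by blast
    moreover have "M' \<inter> S = {}"
    proof (rule ccontr)
      assume "M' \<inter> S \<noteq> {}"
      then obtain e where e: "e \<in> M'" "e \<in> S" by blast
      have "card e = 2" using e(1) p'(1) E2 by blast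
      then obtain x where "x \<in> e" by fastforce
      then show False using e p'(2) unfolding W_def U_def by blast
    qed
    ultimately show "M' = M - S" by blast
  qed
  have Nadj: "\<forall>u\<in>W. \<forall>v\<in>W. N u v \<noteq> 0 \<longleftrightarrow> {u,v} \<in> E"
    using wadj unfolding weighted_adj_def adjacent_def W_def V_def E_def by blast
  have colE: "\<forall>u v. {u,v} \<in> E \<longrightarrow> col u \<noteq> col v" using col E_def by simp
  have injW: "\<forall>a. (\<forall>w'\<in>W. (\<Sum>w\<in>W. N w' w * a w) = 0) \<longrightarrow> (\<forall>w\<in>W. a w = 0)"
    by (rule pm_inj[OF E2 colE Nadj finW pmW uqW])
  define f where "f i = (case i of Inl w \<Rightarrow> (\<lambda>v. if v = w then 1 else 0) | Inr z \<Rightarrow> \<kappa> z)" for i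
  have "card (W <+> Z) \<le> card V"
  proof (rule indep_card_le[OF finV])
    show "finite (W <+> Z)" using finW finZ by simp
    show "\<forall>a. (\<forall>v\<in>V. (\<Sum>i\<in>W <+> Z. a i * f i v) = 0) \<longrightarrow> (\<forall>i\<in>W <+> Z. a i = 0)"
    proof (intro allI impI)
      fix a :: "'v + 'z \<Rightarrow> 'f"
      assume h: "\<forall>v\<in>V. (\<Sum>i\<in>W <+> Z. a i * f i v) = 0"
      define x where "x v = (if v \<in> W then a (Inl v) else 0) + (\<Sum>z\<in>Z. a (Inr z) * \<kappa> z v)" for v
      have xe: "(\<Sum>i\<in>W <+> Z. a i * f i v) = x v" for v
      proof -
        have "(\<Sum>i\<in>W <+> Z. a i * f i v) = (\<Sum>w\<in>W. a (Inl w) * (if v = w then 1 else 0)) + (\<Sum>z\<in>Z. a (Inr z) * \<kappa> z v)"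
          using finW finZ by (simp add: sum.Plus f_def)
        also have "(\<Sum>w\<in>W. a (Inl w) * (if v = w then 1 else 0)) = (if v \<in> W then a (Inl v) else 0)"
          using finW by (simp add: if_distrib[of "\<lambda>t. a (Inl _) * t"] sum.delta' cong: if_cong)
        finally show ?thesis unfolding x_def by simp
      qed
      have x0: "\<forall>v\<in>V. x v = 0" using h xe by simp
      have "\<forall>w'\<in>W. (\<Sum>w\<in>W. N w' w * a (Inl w)) = 0"
      proof
        fix w' assume w': "w' \<in> W"
        have w'V: "w' \<in> verts H" using w' W_def V_def by blast
        have "0 = (\<Sum>u\<in>V. N w' u * x u)" using x0 by simp
        also have "\<dots> = (\<Sum>u\<in>V. N w' u * (if u \<in> W then a (Inl u) else 0)) + (\<Sum>z\<in>Z. a (Inr z) * (\<Sum>u\<in>V. N w' u * \<kappa> z u))"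
          unfolding x_def by (simp add: distrib_left sum.distrib sum_distrib_left sum.swap[of _ Z] mult.left_commute)
        also have "(\<Sum>z\<in>Z. a (Inr z) * (\<Sum>u\<in>V. N w' u * \<kappa> z u)) = 0"
          using kern w'V V_def by simp
        also have "(\<Sum>u\<in>V. N w' u * (if u \<in> W then a (Inl u) else 0)) = (\<Sum>u\<in>W. N w' u * a (Inl u))"
        proof -
          have "(\<Sum>u\<in>V. N w' u * (if u \<in> W then a (Inl u) else 0)) = (\<Sum>u\<in>V. if u \<in> W then N w' u * a (Inl u) else 0)"
            by (intro sum.cong) auto
          also have "\<dots> = (\<Sum>u\<in>V \<inter> W. N w' u * a (Inl u))" using finV by (simp add: sum.inter_restrict)
          also have "V \<inter> W = W" unfolding W_def by blast
          finally show ?thesis .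
        qed
        finally show "(\<Sum>w\<in>W. N w' w * a (Inl w)) = 0" by simp
      qed
      then have aW: "\<forall>w\<in>W. a (Inl w) = 0" using injW[rule_format, of "\<lambda>w. a (Inl w)"] by blast
      have "(if v \<in> W then a (Inl v) else 0) = 0" for v using aW by simp
      then have "\<forall>v\<in>verts H. (\<Sum>z\<in>Z. a (Inr z) * \<kappa> z v) = 0" using x0 unfolding x_def V_def by simp
      then have aZ: "\<forall>z\<in>Z. a (Inr z) = 0" using indep[rule_format, of "\<lambda>z. a (Inr z)"] by blast
      show "\<forall>i\<in>W <+> Z. a i = 0" using aW aZ by auto
    qed
  qed
  then have "card W + card Z \<le> card V" using finW finZ by (simp add: card_Plus)
  moreover have "card U \<le> card V" using card_mono[OF finV UV] .
  ultimately show ?thesis using cardW cardU by linarith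
qed



lemma verts_cart[simp]: "verts (cart G H) = verts G \<times> verts H"
  unfolding cart_def verts_def by simp

lemma cart_edge_iff:
  "{(g,h),(g',h')} \<in> edges (cart G H) \<longleftrightarrow>
     (g = g' \<and> g \<in> verts G \<and> {h,h'} \<in> edges H) \<or> (h = h' \<and> h \<in> verts H \<and> {g,g'} \<in> edges G)"
proof
  assume "{(g,h),(g',h')} \<in> edges (cart G H)"
  then consider (a) g0 h1 h2 where "{(g,h),(g',h')} = {(g0,h1),(g0,h2)}" "g0 \<in> verts G" "{h1,h2} \<in> edges H"
    | (b) g1 g2 h0 where "{(g,h),(g',h')} = {(g1,h0),(g2,h0)}" "h0 \<in> verts H" "{g1,g2} \<in> edges G"
    unfolding cart_def edges_def verts_def by auto
  then show "(g = g' \<and> g \<in> verts G \<and> {h,h'} \<in> edges H) \<or> (h = h' \<and> h \<in> verts H \<and> {g,g'} \<in> edges G)"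
  proof cases
    case a
    then show ?thesis by (auto simp: doubleton_eq_iff insert_commute)
  next
    case b
    then show ?thesis by (auto simp: doubleton_eq_iff insert_commute)
  qed
next
  assume "(g = g' \<and> g \<in> verts G \<and> {h,h'} \<in> edges H) \<or> (h = h' \<and> h \<in> verts H \<and> {g,g'} \<in> edges G)"
  then show "{(g,h),(g',h')} \<in> edges (cart G H)"
    unfolding cart_def edges_def verts_def by auto
qed

lemma cart_edge_form:
  assumes "e \<in> edges (cart G H)"
  shows "\<exists>u v. e = {u, v}"
  using assms unfolding cart_def edges_def by auto

fun dist1 :: "bool list \<Rightarrow> bool list \<Rightarrow> bool" where
  "dist1 [] [] = False"
| "dist1 (a#xs) (b#ys) = (if a = b then dist1 xs ys else xs = ys)"
| "dist1 _ _ = False"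

lemma dist1_sym: "dist1 xs ys = dist1 ys xs"
  by (induction xs ys rule: dist1.induct) auto

lemma dist1_neq: "dist1 xs ys \<Longrightarrow> xs \<noteq> ys"
  by (induction xs ys rule: dist1.induct) auto

lemma diffset_Cons:
  "{i. i < Suc (length xs) \<and> (a#xs)!i \<noteq> (b#ys)!i} =
     (if a \<noteq> b then {0} else {}) \<union> Suc ` {i. i < length xs \<and> xs!i \<noteq> ys!i}"
proof (rule set_eqI)
  fix i show "i \<in> {i. i < Suc (length xs) \<and> (a#xs)!i \<noteq> (b#ys)!i} \<longleftrightarrow>
     i \<in> (if a \<noteq> b then {0} else {}) \<union> Suc ` {i. i < length xs \<and> xs!i \<noteq> ys!i}"
    by (cases i) auto
qed

lemma card_diff_dist1:
  "length xs = length ys \<Longrightarrow> card {i. i < length xs \<and> xs!i \<noteq> ys!i} = 1 \<longleftrightarrow> dist1 xs ys"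
proof (induction xs ys rule: dist1.induct)
  case 1 then show ?case by simp
next
  case (2 a xs b ys)
  have len: "length xs = length ys" using 2(2) by simp
  have fin: "finite {i. i < length xs \<and> xs!i \<noteq> ys!i}" by simp
  have c: "card {i. i < length (a#xs) \<and> (a#xs)!i \<noteq> (b#ys)!i} =
     (if a \<noteq> b then 1 else 0) + card {i. i < length xs \<and> xs!i \<noteq> ys!i}"
    using diffset_Cons[of xs a b ys] fin by (simp add: card_image)
  have e: "card {i. i < length xs \<and> xs!i \<noteq> ys!i} = 0 \<longleftrightarrow> xs = ys"
    using len fin by (auto simp: nth_equalityI)
  show ?case using c e 2(1)[OF _ len] by auto
qed auto

lemma verts_hyp[simp]: "verts (hypercube d) = {xs. length xs = d}"
  unfolding hypercube_def verts_def by simp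

lemma hyp_edge_iff:
  "{xs, ys} \<in> edges (hypercube d) \<longleftrightarrow> length xs = d \<and> length ys = d \<and> dist1 xs ys"
proof
  assume "{xs, ys} \<in> edges (hypercube d)"
  then obtain xs' ys' where h: "{xs, ys} = {xs', ys'}" "length xs' = d" "length ys' = d"
     "card {i. i < d \<and> xs' ! i \<noteq> ys' ! i} = 1"
    unfolding hypercube_def edges_def by auto
  then have "dist1 xs' ys'" using card_diff_dist1[of xs' ys'] by simp
  then show "length xs = d \<and> length ys = d \<and> dist1 xs ys"
    using h by (auto simp: doubleton_eq_iff dist1_sym)
next
  assume h: "length xs = d \<and> length ys = d \<and> dist1 xs ys"
  then have "card {i. i < d \<and> xs ! i \<noteq> ys ! i} = 1" using card_diff_dist1[of xs ys] by simp
  then show "{xs, ys} \<in> edges (hypercube d)"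
    unfolding hypercube_def edges_def using h by auto
qed

lemma hyp_edge_form: "e \<in> edges (hypercube d) \<Longrightarrow> \<exists>u v. e = {u,v}"
  unfolding hypercube_def edges_def by auto

lemma verts_cycle[simp]: "verts (cycle n) = {0..<n}"
  unfolding cycle_def verts_def by simp

lemma cycle_edge_iff:
  "{p, q} \<in> edges (cycle n) \<longleftrightarrow> (p < n \<and> q = Suc p mod n) \<or> (q < n \<and> p = Suc q mod n)"
  unfolding cycle_def edges_def by (auto simp: doubleton_eq_iff)

lemma cycle_edge_form: "e \<in> edges (cycle n) \<Longrightarrow> \<exists>u v. e = {u,v}"
  unfolding cycle_def edges_def by auto

lemma simple_cart:
  assumes "simple_graph G" "simple_graph H"
  shows "simple_graph (cart G H)"
  unfolding simple_graph_def
proof (rule conjI)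
  show "finite (verts (cart G H))" using assms unfolding simple_graph_def by simp
next
  show "\<forall>e\<in>edges (cart G H). e \<subseteq> verts (cart G H) \<and> card e = 2"
  proof
  fix e assume e: "e \<in> edges (cart G H)"
  then obtain u v where uv: "e = {u,v}" using cart_edge_form by blast
  obtain g h g' h' where "u = (g,h)" "v = (g',h')" by (cases u, cases v) auto
  then have "(g = g' \<and> g \<in> verts G \<and> {h,h'} \<in> edges H) \<or> (h = h' \<and> h \<in> verts H \<and> {g,g'} \<in> edges G)"
    using e uv cart_edge_iff by metis
  then show "e \<subseteq> verts (cart G H) \<and> card e = 2"
  proof
    assume a: "g = g' \<and> g \<in> verts G \<and> {h,h'} \<in> edges H"
    then have "card {h,h'} = 2" "{h,h'} \<subseteq> verts H" using assms(2) unfolding simple_graph_def by auto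
    then have "h \<noteq> h'" by (cases "h = h'") auto
    then show ?thesis using a uv \<open>u = (g,h)\<close> \<open>v = (g',h')\<close> \<open>{h,h'} \<subseteq> verts H\<close> by auto
  next
    assume a: "h = h' \<and> h \<in> verts H \<and> {g,g'} \<in> edges G"
    then have "card {g,g'} = 2" "{g,g'} \<subseteq> verts G" using assms(1) unfolding simple_graph_def by auto
    then have "g \<noteq> g'" by (cases "g = g'") auto
    then show ?thesis using a uv \<open>u = (g,h)\<close> \<open>v = (g',h')\<close> \<open>{g,g'} \<subseteq> verts G\<close> by auto
  qed
  qed
qed

lemma finite_Ld: "finite {xs :: bool list. length xs = d}"
proof -
  have "{xs :: bool list. length xs = d} = {xs. set xs \<subseteq> UNIV \<and> length xs = d}" by simp
  then show ?thesis using finite_lists_length_eq[of "UNIV :: bool set" d] by simp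
qed

lemma card_Ld: "card {xs :: bool list. length xs = d} = 2 ^ d"
proof -
  have "{xs :: bool list. length xs = d} = {xs. set xs \<subseteq> UNIV \<and> length xs = d}" by simp
  then show ?thesis using card_lists_length_eq[of "UNIV :: bool set" d] by simp
qed

lemma simple_hyp: "simple_graph (hypercube d)"
  unfolding simple_graph_def
proof (rule conjI)
  show "finite (verts (hypercube d))" using finite_Ld by simp
next
  show "\<forall>e\<in>edges (hypercube d). e \<subseteq> verts (hypercube d) \<and> card e = 2"
  proof
  fix e assume e: "e \<in> edges (hypercube d)"
  then obtain u v where uv: "e = {u,v}" using hyp_edge_form by blast
  then have "length u = d \<and> length v = d \<and> dist1 u v" using e hyp_edge_iff by metis
  then show "e \<subseteq> verts (hypercube d) \<and> card e = 2" using uv dist1_neq by auto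
  qed
qed

lemma simple_cycle: assumes n: "n \<ge> 3" shows "simple_graph (cycle n)"
  unfolding simple_graph_def
proof (rule conjI)
  show "finite (verts (cycle n))" by simp
next
  show "\<forall>e\<in>edges (cycle n). e \<subseteq> verts (cycle n) \<and> card e = 2"
  proof
  fix e assume e: "e \<in> edges (cycle n)"
  then obtain i where i: "i < n" "e = {i, Suc i mod n}" unfolding cycle_def edges_def by auto
  have "Suc i mod n \<noteq> i"
  proof (cases "Suc i < n")
    case True then show ?thesis by simp
  next
    case False then have "Suc i = n" using i by simp
    then show ?thesis using n by simp
  qed
  then show "e \<subseteq> verts (cycle n) \<and> card e = 2" using i n by auto
  qed
qed

definition par :: "bool list \<Rightarrow> bool" where "par xs = odd (length (filter id xs))"

lemma par_Cons: "par (b # xs) = (b \<noteq> par xs)"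
  unfolding par_def by auto

lemma dist1_par: "dist1 xs ys \<Longrightarrow> par xs \<noteq> par ys"
  by (induction xs ys rule: dist1.induct) (auto simp: par_Cons split: if_splits)



fun hk :: "('a \<Rightarrow> 'a \<Rightarrow> 'f::field) \<Rightarrow> 'f \<Rightarrow> bool list \<Rightarrow> bool list \<Rightarrow> 'a \<Rightarrow> 'a \<Rightarrow> 'f" where
  "hk A a [] [] g g' = A g g'"
| "hk A a (b#xs) (b'#ys) g g' = (if b = b' then (if b then - a else a) * hk A a xs ys g g'
      else if xs = ys \<and> g = g' then (if b then 1 - a*a else 1) else 0)"
| "hk A a (b#xs) [] g g' = 0"
| "hk A a [] (b#ys) g g' = 0"

lemma Ld_Suc: "{xs :: bool list. length xs = Suc d} = Cons True ` {xs. length xs = d} \<union> Cons False ` {xs. length xs = d}"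
proof (rule set_eqI)
  fix xs :: "bool list"
  show "xs \<in> {xs. length xs = Suc d} \<longleftrightarrow> xs \<in> Cons True ` {xs. length xs = d} \<union> Cons False ` {xs. length xs = d}"
    by (cases xs) auto
qed

lemma sum_Ld_Suc:
  "(\<Sum>zs\<in>{xs :: bool list. length xs = Suc d}. F zs) = (\<Sum>zs\<in>{xs. length xs = d}. F (True#zs) + F (False#zs))"
proof -
  have "(\<Sum>zs\<in>{xs :: bool list. length xs = Suc d}. F zs) =
     (\<Sum>zs\<in>Cons True ` {xs. length xs = d}. F zs) + (\<Sum>zs\<in>Cons False ` {xs. length xs = d}. F zs)"
    unfolding Ld_Suc by (rule sum.union_disjoint) (auto simp: finite_Ld)
  also have "\<dots> = (\<Sum>zs\<in>{xs. length xs = d}. F (True#zs)) + (\<Sum>zs\<in>{xs. length xs = d}. F (False#zs))"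
    by (simp add: sum.reindex)
  finally show ?thesis by (simp add: sum.distrib)
qed

lemma delta_sum2:
  assumes "finite V" "finite L" "g0 \<in> V" "z0 \<in> L"
  shows "(\<Sum>h\<in>V. \<Sum>z\<in>L. (if z0 = z \<and> g0 = h then X h z else 0)) = X g0 z0"
proof -
  have "(\<Sum>z\<in>L. (if z0 = z \<and> g0 = h then X h z else 0)) = (if g0 = h then X h z0 else 0)" for h
    using assms by (cases "g0 = h") (simp_all add: sum.delta)
  then show ?thesis using assms by (simp add: sum.delta)
qed

lemma delta_sum2':
  assumes "finite V" "finite L" "g0 \<in> V" "z0 \<in> L"
  shows "(\<Sum>h\<in>V. \<Sum>z\<in>L. (if z = z0 \<and> h = g0 then X h z else 0)) = X g0 z0"
proof -
  have "(\<Sum>h\<in>V. \<Sum>z\<in>L. (if z = z0 \<and> h = g0 then X h z else 0)) = (\<Sum>h\<in>V. \<Sum>z\<in>L. (if z0 = z \<and> g0 = h then X h z else 0))"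
    by (intro sum.cong refl) auto
  then show ?thesis using delta_sum2[OF assms] by simp
qed

lemma hk_inv:
  fixes A :: "'a \<Rightarrow> 'a \<Rightarrow> 'f::field"
  assumes finV: "finite V" and invA: "\<forall>g\<in>V. \<forall>g'\<in>V. (\<Sum>h\<in>V. A g h * A h g') = (if g = g' then 1 else 0)"
  shows "length xs = d \<Longrightarrow> length ys = d \<Longrightarrow> g \<in> V \<Longrightarrow> g' \<in> V \<Longrightarrow>
    (\<Sum>h\<in>V. \<Sum>zs\<in>{zs. length zs = d}. hk A a xs zs g h * hk A a zs ys h g') = (if xs = ys \<and> g = g' then 1 else 0)"
proof (induction d arbitrary: xs ys g g')
  case 0
  then show ?case using invA by simp
next
  case (Suc d)
  obtain b xs' where xs: "xs = b # xs'" "length xs' = d" using Suc.prems(1) by (cases xs) auto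
  obtain b' ys' where ys: "ys = b' # ys'" "length ys' = d" using Suc.prems(2) by (cases ys) auto
  define s where "s c = (if c then - a else a)" for c :: bool
  define oo where "oo c = (if c then 1 - a*a else 1)" for c :: bool
  define L where "L = {zs :: bool list. length zs = d}"
  have finL: "finite L" unfolding L_def by (rule finite_Ld)
  have xsL: "xs' \<in> L" "ys' \<in> L" using xs ys L_def by auto
  define P where "P h zs = hk A a xs zs g h * hk A a zs ys h g'" for h zs
  have step1: "(\<Sum>h\<in>V. \<Sum>zs\<in>{zs. length zs = Suc d}. P h zs) = (\<Sum>h\<in>V. \<Sum>zs\<in>L. P h (b#zs) + P h ((\<not>b)#zs))"
    unfolding L_def sum_Ld_Suc by (intro sum.cong refl) (cases b; simp add: add.commute)
  have Pb: "P h (b#zs) = s b * (hk A a xs' zs g h * hk A a (b#zs) ys h g')" for h zs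
    unfolding P_def xs s_def by simp
  have Pnb: "P h ((\<not>b)#zs) = (if xs' = zs \<and> g = h then oo b * hk A a ((\<not>b)#zs) ys h g' else 0)" for h zs
    unfolding P_def xs oo_def by auto
  have second: "(\<Sum>h\<in>V. \<Sum>zs\<in>L. P h ((\<not>b)#zs)) = oo b * hk A a ((\<not>b)#xs') ys g g'"
    unfolding Pnb by (rule delta_sum2[OF finV finL Suc.prems(3) xsL(1), where X="\<lambda>h zs. oo b * hk A a ((\<not>b)#zs) ys h g'"])
  have split: "(\<Sum>h\<in>V. \<Sum>zs\<in>L. P h (b#zs) + P h ((\<not>b)#zs)) =
      (\<Sum>h\<in>V. \<Sum>zs\<in>L. P h (b#zs)) + (\<Sum>h\<in>V. \<Sum>zs\<in>L. P h ((\<not>b)#zs))"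
    by (simp add: sum.distrib)
  show ?case
  proof (cases "b' = b")
    case True
    have "(\<Sum>h\<in>V. \<Sum>zs\<in>L. P h (b#zs)) = s b * s b * (\<Sum>h\<in>V. \<Sum>zs\<in>L. hk A a xs' zs g h * hk A a zs ys' h g')"
      unfolding Pb ys True by (simp add: s_def sum_distrib_left mult.assoc mult.left_commute)
    also have "\<dots> = a * a * (if xs' = ys' \<and> g = g' then 1 else 0)"
      using Suc.IH[OF xs(2) ys(2) Suc.prems(3,4)] unfolding L_def s_def by simp
    finally have first: "(\<Sum>h\<in>V. \<Sum>zs\<in>L. P h (b#zs)) = a * a * (if xs' = ys' \<and> g = g' then 1 else 0)" .
    have "oo b * hk A a ((\<not>b)#xs') ys g g' = (1 - a * a) * (if xs' = ys' \<and> g = g' then 1 else 0)"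
      unfolding ys True oo_def by auto
    then show ?thesis using step1 split first second xs ys True unfolding P_def
      by (simp add: algebra_simps)
  next
    case False
    then have b': "b' = (\<not> b)" by simp
    have "(\<Sum>h\<in>V. \<Sum>zs\<in>L. P h (b#zs)) = (\<Sum>h\<in>V. \<Sum>zs\<in>L. (if zs = ys' \<and> h = g' then s b * oo b * hk A a xs' zs g h else 0))"
      unfolding Pb ys b' oo_def by (intro sum.cong refl) auto
    also have "\<dots> = s b * oo b * hk A a xs' ys' g g'"
      by (rule delta_sum2'[OF finV finL Suc.prems(4) xsL(2)])
    finally have first: "(\<Sum>h\<in>V. \<Sum>zs\<in>L. P h (b#zs)) = s b * oo b * hk A a xs' ys' g g'" .
    have sec: "oo b * hk A a ((\<not>b)#xs') ys g g' = - (s b * oo b * hk A a xs' ys' g g')"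
      unfolding ys b' s_def by auto
    have "(\<Sum>h\<in>V. \<Sum>zs\<in>{zs. length zs = Suc d}. P h zs) = 0"
      using step1 split first second sec by simp
    then show ?thesis using xs ys False unfolding P_def by simp
  qed
qed

lemma hk_nz:
  fixes A :: "'a \<Rightarrow> 'a \<Rightarrow> 'f::field"
  assumes "a \<noteq> 0" "1 - a * a \<noteq> 0"
  shows "length xs = length ys \<Longrightarrow> (hk A a xs ys g g' \<noteq> 0 \<longleftrightarrow> (xs = ys \<and> A g g' \<noteq> 0) \<or> (g = g' \<and> dist1 xs ys))"
proof (induction xs ys rule: dist1.induct)
  case (2 b xs b' ys)
  then show ?case using assms by auto
qed auto

definition KM :: "'a set \<Rightarrow> ('a \<Rightarrow> 'a \<Rightarrow> 'f::field) \<Rightarrow> 'f \<Rightarrow> nat \<Rightarrow> ('a \<times> bool list) \<Rightarrow> ('a \<times> bool list) \<Rightarrow> 'f" where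
  "KM V A a d u v = (if fst u \<in> V \<and> fst v \<in> V \<and> length (snd u) = d \<and> length (snd v) = d
      then hk A a (snd u) (snd v) (fst u) (fst v) else 0)"

lemma invol_adjD:
  assumes "A \<in> invol_adj G"
  shows "\<And>u v. u \<notin> verts G \<or> v \<notin> verts G \<Longrightarrow> A u v = 0"
    "\<And>u v. u \<in> verts G \<Longrightarrow> v \<in> verts G \<Longrightarrow> A u v \<noteq> 0 \<longleftrightarrow> {u,v} \<in> edges G"
    "\<forall>u\<in>verts G. \<forall>v\<in>verts G. (\<Sum>w\<in>verts G. A u w * A w v) = (if u = v then 1 else 0)"
  using assms unfolding invol_adj_def weighted_adj_def involutory_def adjacent_def by auto

lemma sum_pair_Ld:
  "(\<Sum>w\<in>V \<times> {zs :: bool list. length zs = d}. F w) = (\<Sum>h\<in>V. \<Sum>zs\<in>{zs. length zs = d}. F (h, zs))"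
  by (simp add: sum.cartesian_product)

lemma KM_invol_adj:
  fixes A :: "'a \<Rightarrow> 'a \<Rightarrow> 'f::field"
  assumes sg: "simple_graph G" and A: "A \<in> invol_adj G" and a: "a \<noteq> 0" "1 - a * a \<noteq> 0"
  shows "KM (verts G) A a d \<in> invol_adj (cart G (hypercube d))"
proof -
  define V where "V = verts G"
  have finV: "finite V" using sg unfolding simple_graph_def V_def by simp
  note Ad = invol_adjD[OF A]
  have inv: "involutory (verts (cart G (hypercube d))) (KM V A a d)"
    unfolding involutory_def
  proof (intro ballI)
    fix u v assume u: "u \<in> verts (cart G (hypercube d))" and v: "v \<in> verts (cart G (hypercube d))"
    obtain g xs where gx: "u = (g, xs)" "g \<in> V" "length xs = d" using u V_def by (cases u) auto
    obtain g' ys where gy: "v = (g', ys)" "g' \<in> V" "length ys = d" using v V_def by (cases v) auto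
    have "(\<Sum>w\<in>verts (cart G (hypercube d)). KM V A a d u w * KM V A a d w v)
        = (\<Sum>h\<in>V. \<Sum>zs\<in>{zs. length zs = d}. KM V A a d u (h,zs) * KM V A a d (h,zs) v)"
      using sum_pair_Ld V_def by simp
    also have "\<dots> = (\<Sum>h\<in>V. \<Sum>zs\<in>{zs. length zs = d}. hk A a xs zs g h * hk A a zs ys h g')"
      unfolding KM_def gx gy using gx gy by (intro sum.cong refl) auto
    also have "\<dots> = (if xs = ys \<and> g = g' then 1 else 0)"
      using hk_inv[OF finV, of A xs d ys g g' a] Ad(3) gx gy V_def by simp
    finally show "(\<Sum>w\<in>verts (cart G (hypercube d)). KM V A a d u w * KM V A a d w v) = (if u = v then 1 else 0)"
      using gx gy by simp
  qed
  have wa: "weighted_adj (cart G (hypercube d)) (KM V A a d)"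
    unfolding weighted_adj_def
  proof (intro conjI allI impI ballI)
    fix u v assume "u \<notin> verts (cart G (hypercube d)) \<or> v \<notin> verts (cart G (hypercube d))"
    then show "KM V A a d u v = 0" unfolding KM_def V_def by (cases u, cases v) auto
  next
    fix u v assume u: "u \<in> verts (cart G (hypercube d))" and v: "v \<in> verts (cart G (hypercube d))"
    obtain g xs where gx: "u = (g, xs)" "g \<in> V" "length xs = d" using u V_def by (cases u) auto
    obtain g' ys where gy: "v = (g', ys)" "g' \<in> V" "length ys = d" using v V_def by (cases v) auto
    have "KM V A a d u v \<noteq> 0 \<longleftrightarrow> (xs = ys \<and> A g g' \<noteq> 0) \<or> (g = g' \<and> dist1 xs ys)"
      unfolding KM_def using gx gy hk_nz[OF a, of xs ys A g g'] by simp
    also have "\<dots> \<longleftrightarrow> adjacent (cart G (hypercube d)) u v"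
      unfolding adjacent_def gx gy cart_edge_iff hyp_edge_iff using gx gy Ad(2) V_def by auto
    finally show "KM V A a d u v \<noteq> 0 \<longleftrightarrow> adjacent (cart G (hypercube d)) u v" .
  qed
  show ?thesis using inv wa unfolding invol_adj_def V_def by simp
qed



fun nd :: "('a \<Rightarrow> 'a \<Rightarrow> 'f::field) \<Rightarrow> 'f \<Rightarrow> bool list \<Rightarrow> bool list \<Rightarrow> 'a \<Rightarrow> 'a \<Rightarrow> 'f" where
  "nd A a (b#xs) (b'#ys) g g' = (if b = b' then hk A a xs ys g g' else if xs = ys \<and> g = g' then 1 else 0)"
| "nd A a (b#xs) [] g g' = 0"
| "nd A a [] ys g g' = 0"

definition NDm :: "'a set \<Rightarrow> ('a \<Rightarrow> 'a \<Rightarrow> 'f::field) \<Rightarrow> 'f \<Rightarrow> nat \<Rightarrow> ('a \<times> bool list) \<Rightarrow> ('a \<times> bool list) \<Rightarrow> 'f" where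
  "NDm V A a d u v = (if fst u \<in> V \<and> fst v \<in> V \<and> length (snd u) = Suc d \<and> length (snd v) = Suc d
      then nd A a (snd u) (snd v) (fst u) (fst v) else 0)"

definition kap :: "('a \<Rightarrow> 'a \<Rightarrow> 'f::field) \<Rightarrow> 'f \<Rightarrow> ('a \<times> bool list) \<Rightarrow> ('a \<times> bool list) \<Rightarrow> 'f" where
  "kap A a z v = (case snd v of [] \<Rightarrow> 0 | b # xs \<Rightarrow>
      (if b then - hk A a xs (snd z) (fst v) (fst z) else if xs = snd z \<and> fst v = fst z then 1 else 0))"

lemma bip_col:
  assumes "bipartite G" "simple_graph G"
  shows "\<exists>c :: 'a \<Rightarrow> bool. \<forall>u v. {u,v} \<in> edges G \<longrightarrow> c u \<noteq> c v"
proof -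
  obtain X where X: "X \<subseteq> verts G" "\<forall>e\<in>edges G. card (e \<inter> X) = 1"
    using assms(1) unfolding bipartite_def by blast
  have "(u \<in> X) \<noteq> (v \<in> X)" if e: "{u,v} \<in> edges G" for u v
  proof -
    have c2: "card {u,v} = 2" using e assms(2) unfolding simple_graph_def by blast
    then have uv: "u \<noteq> v" by (cases "u = v") auto
    have "card ({u,v} \<inter> X) = 1" using X e by blast
    then show ?thesis using uv by (cases "u \<in> X"; cases "v \<in> X") auto
  qed
  then show ?thesis
  proof (intro exI[where x="\<lambda>u. u \<in> X"] allI impI)
    fix u v assume "\<And>u v. {u, v} \<in> edges G \<Longrightarrow> (u \<in> X) \<noteq> (v \<in> X)" "{u,v} \<in> edges G"
    then show "(u \<in> X) \<noteq> (v \<in> X)" by blast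
  qed
qed

lemma cart_hyp_col:
  fixes c :: "'a \<Rightarrow> bool"
  assumes "\<forall>u v. {u,v} \<in> edges G \<longrightarrow> c u \<noteq> c v"
  shows "\<forall>u v. {u,v} \<in> edges (cart G (hypercube d)) \<longrightarrow> (\<lambda>(g,xs). c g \<noteq> par xs) u \<noteq> (\<lambda>(g,xs). c g \<noteq> par xs) v"
proof (intro allI impI)
  fix u v assume e: "{u,v} \<in> edges (cart G (hypercube d))"
  obtain g xs g' ys where uv: "u = (g,xs)" "v = (g',ys)" by (cases u, cases v) auto
  show "(\<lambda>(g,xs). c g \<noteq> par xs) u \<noteq> (\<lambda>(g,xs). c g \<noteq> par xs) v"
    using e assms dist1_par unfolding uv cart_edge_iff hyp_edge_iff by auto
qed

lemma lower_d:
  fixes A :: "'a \<Rightarrow> 'a \<Rightarrow> 'f::field" and a :: 'f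
  assumes sg: "simple_graph G" and bip: "bipartite G" and A: "A \<in> invol_adj G"
    and a: "a \<noteq> 0" "1 - a * a \<noteq> 0"
    and pm: "perfect_matching (cart G (hypercube (Suc d))) M"
    and fs: "forcing_set (cart G (hypercube (Suc d))) M S"
  shows "card (verts G) * 2 ^ d \<le> 2 * card S"
proof -
  define V where "V = verts G"
  define L where "L = {zs :: bool list. length zs = d}"
  have finV: "finite V" using sg unfolding simple_graph_def V_def by simp
  have finL: "finite L" unfolding L_def by (rule finite_Ld)
  note Ad = invol_adjD[OF A]
  have invA: "\<forall>g\<in>V. \<forall>g'\<in>V. (\<Sum>h\<in>V. A g h * A h g') = (if g = g' then 1 else 0)"
    using Ad(3) V_def by simp
  have hkinv: "(\<Sum>h\<in>V. \<Sum>zs\<in>L. hk A a xs zs g h * hk A a zs ys h g') = (if xs = ys \<and> g = g' then 1 else 0)"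
    if "xs \<in> L" "ys \<in> L" "g \<in> V" "g' \<in> V" for xs ys g g'
    using hk_inv[OF finV invA, of xs d ys g g' a] that L_def by simp
  obtain c :: "'a \<Rightarrow> bool" where c: "\<forall>u v. {u,v} \<in> edges G \<longrightarrow> c u \<noteq> c v" using bip_col[OF bip sg] by blast
  define H where "H = cart G (hypercube (Suc d))"
  have sgH: "simple_graph H" unfolding H_def by (rule simple_cart[OF sg simple_hyp])
  have colH: "\<forall>u v. {u,v} \<in> edges H \<longrightarrow> (\<lambda>(g,xs). c g \<noteq> par xs) u \<noteq> (\<lambda>(g,xs). c g \<noteq> par xs) v"
    unfolding H_def by (rule cart_hyp_col[OF c])
  have vH: "verts H = V \<times> {zs. length zs = Suc d}" unfolding H_def V_def by simp
  have wa: "weighted_adj H (NDm V A a d)"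
    unfolding weighted_adj_def
  proof (intro conjI allI impI ballI)
    fix u v assume "u \<notin> verts H \<or> v \<notin> verts H"
    then show "NDm V A a d u v = 0" unfolding NDm_def vH by (cases u, cases v) auto
  next
    fix u v assume u: "u \<in> verts H" and v: "v \<in> verts H"
    obtain g b xs where gx: "u = (g, b#xs)" "g \<in> V" "length xs = d"
      using u vH by (cases u) (auto simp: length_Suc_conv)
    obtain g' b' ys where gy: "v = (g', b'#ys)" "g' \<in> V" "length ys = d"
      using v vH by (cases v) (auto simp: length_Suc_conv)
    have "NDm V A a d u v \<noteq> 0 \<longleftrightarrow> (b#xs = b'#ys \<and> A g g' \<noteq> 0) \<or> (g = g' \<and> dist1 (b#xs) (b'#ys))"
      unfolding NDm_def using gx gy hk_nz[OF a, of xs ys A g g'] by auto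
    also have "\<dots> \<longleftrightarrow> adjacent H u v"
      unfolding adjacent_def H_def gx gy cart_edge_iff hyp_edge_iff using gx gy Ad(2) V_def by auto
    finally show "NDm V A a d u v \<noteq> 0 \<longleftrightarrow> adjacent H u v" .
  qed
  define Z where "Z = V \<times> L"
  have finZ: "finite Z" using finV finL Z_def by simp
  have kern: "\<forall>z\<in>Z. \<forall>v\<in>verts H. (\<Sum>u\<in>verts H. NDm V A a d v u * kap A a z u) = 0"
  proof (intro ballI)
    fix z v assume z: "z \<in> Z" and v: "v \<in> verts H"
    obtain h zs where hz: "z = (h, zs)" "h \<in> V" "zs \<in> L" using z Z_def by auto
    obtain g b xs where gx: "v = (g, b#xs)" "g \<in> V" "xs \<in> L"
      using v vH L_def by (cases v) (auto simp: length_Suc_conv)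
    define T where "T h' ys = NDm V A a d v (h', ys) * kap A a z (h', ys)" for h' ys
    have "(\<Sum>u\<in>verts H. NDm V A a d v u * kap A a z u) = (\<Sum>h'\<in>V. \<Sum>ys\<in>{zs. length zs = Suc d}. T h' ys)"
      unfolding vH T_def by (simp add: sum.cartesian_product)
    also have "\<dots> = (\<Sum>h'\<in>V. \<Sum>ys\<in>L. T h' (True#ys) + T h' (False#ys))"
      unfolding L_def by (simp add: sum_Ld_Suc)
    also have "\<dots> = (\<Sum>h'\<in>V. \<Sum>ys\<in>L. T h' (True#ys)) + (\<Sum>h'\<in>V. \<Sum>ys\<in>L. T h' (False#ys))"
      by (simp add: sum.distrib)
    also have "\<dots> = 0"
    proof (cases b)
      case True
      then have vT: "v = (g, True # xs)" using gx by simp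
      have "(\<Sum>h'\<in>V. \<Sum>ys\<in>L. T h' (True#ys)) = (\<Sum>h'\<in>V. \<Sum>ys\<in>L. - (hk A a xs ys g h' * hk A a ys zs h' h))"
        unfolding T_def NDm_def kap_def vT hz using gx hz L_def
        by (intro sum.cong refl) auto
      also have "\<dots> = - (\<Sum>h'\<in>V. \<Sum>ys\<in>L. hk A a xs ys g h' * hk A a ys zs h' h)"
        by (simp add: sum_negf)
      finally have t1: "(\<Sum>h'\<in>V. \<Sum>ys\<in>L. T h' (True#ys)) = - (\<Sum>h'\<in>V. \<Sum>ys\<in>L. hk A a xs ys g h' * hk A a ys zs h' h)" .
      have t2: "(\<Sum>h'\<in>V. \<Sum>ys\<in>L. T h' (False#ys)) = (\<Sum>h'\<in>V. \<Sum>ys\<in>L. (if xs = ys \<and> g = h' then (if ys = zs \<and> h' = h then 1 else 0) else 0))"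
        unfolding T_def NDm_def kap_def vT hz using gx hz L_def
        by (intro sum.cong refl) auto
      also have "\<dots> = (if xs = zs \<and> g = h then 1 else 0)"
        by (rule delta_sum2[OF finV finL gx(2) gx(3), where X="\<lambda>h' ys. (if ys = zs \<and> h' = h then 1 else 0)"])
      finally show ?thesis using t1 hkinv[OF gx(3) hz(3) gx(2) hz(2)] by simp
    next
      case False
      then have vT: "v = (g, False # xs)" using gx by simp
      have t1: "(\<Sum>h'\<in>V. \<Sum>ys\<in>L. T h' (True#ys)) = (\<Sum>h'\<in>V. \<Sum>ys\<in>L. (if xs = ys \<and> g = h' then - hk A a ys zs h' h else 0))"
        unfolding T_def NDm_def kap_def vT hz using gx hz L_def
        by (intro sum.cong refl) auto
      also have "\<dots> = - hk A a xs zs g h"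
        by (rule delta_sum2[OF finV finL gx(2) gx(3), where X="\<lambda>h' ys. - hk A a ys zs h' h"])
      finally have t1': "(\<Sum>h'\<in>V. \<Sum>ys\<in>L. T h' (True#ys)) = - hk A a xs zs g h" .
      have t2: "(\<Sum>h'\<in>V. \<Sum>ys\<in>L. T h' (False#ys)) = (\<Sum>h'\<in>V. \<Sum>ys\<in>L. (if ys = zs \<and> h' = h then hk A a xs ys g h' else 0))"
        unfolding T_def NDm_def kap_def vT hz using gx hz L_def
        by (intro sum.cong refl) auto
      also have "\<dots> = hk A a xs zs g h"
        by (rule delta_sum2'[OF finV finL hz(2) hz(3), where X="\<lambda>h' ys. hk A a xs ys g h'"])
      finally show ?thesis using t1' by simp
    qed
    finally show "(\<Sum>u\<in>verts H. NDm V A a d v u * kap A a z u) = 0" .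
  qed
  have indep: "\<forall>b. (\<forall>v\<in>verts H. (\<Sum>z\<in>Z. b z * kap A a z v) = 0) \<longrightarrow> (\<forall>z\<in>Z. b z = 0)"
  proof (intro allI impI ballI)
    fix \<beta> :: "'a \<times> bool list \<Rightarrow> 'f" and z
    assume h: "\<forall>v\<in>verts H. (\<Sum>z\<in>Z. \<beta> z * kap A a z v) = 0" and z: "z \<in> Z"
    obtain g xs where gx: "z = (g, xs)" "g \<in> V" "xs \<in> L" using z Z_def by auto
    have "(g, False # xs) \<in> verts H" using gx vH L_def by simp
    then have "0 = (\<Sum>z'\<in>Z. \<beta> z' * kap A a z' (g, False # xs))" using h by simp
    also have "\<dots> = (\<Sum>z'\<in>Z. if z' = z then \<beta> z' else 0)"
      unfolding kap_def gx by (intro sum.cong refl) auto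
    also have "\<dots> = \<beta> z" using finZ z by simp
    finally show "\<beta> z = 0" by simp
  qed
  have "card Z \<le> 2 * card S"
    by (rule forcing_lower[OF sgH colH wa finZ kern indep pm[folded H_def] fs[folded H_def]])
  moreover have "card Z = card (verts G) * 2 ^ d"
    unfolding Z_def V_def L_def by (simp add: card_cartesian_product card_Ld)
  ultimately show ?thesis by simp
qed



definition sucL :: "nat \<Rightarrow> nat \<Rightarrow> nat" where "sucL L p = (if p + 1 = L then 0 else p + 1)"
definition preL :: "nat \<Rightarrow> nat \<Rightarrow> nat" where "preL L p = (if p = 0 then L - 1 else p - 1)"
definition cc :: "nat \<Rightarrow> nat \<Rightarrow> nat" where
  "cc L p = (if 4 dvd L \<or> p + 6 < L then p mod 4 else (p + 6 - L) mod 3)"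

lemma m4: "q mod 4 \<noteq> Suc q mod 4" "q mod 4 \<noteq> Suc (Suc q) mod 4" "Suc q mod 4 \<noteq> Suc (Suc q) mod 4"
  by (simp_all add: mod_Suc)

lemma m3: "q mod 3 \<noteq> Suc q mod 3" "q mod 3 \<noteq> Suc (Suc q) mod 3" "Suc q mod 3 \<noteq> Suc (Suc q) mod 3"
  by (simp_all add: mod_Suc)

lemma mod4r: "r < 4 \<Longrightarrow> (4 * x + r) mod 4 = (r::nat)" by simp

lemma cc_ok:
  assumes "even L" "L \<ge> 4" "p < L"
  shows "cc L (preL L p) \<noteq> cc L p \<and> cc L p \<noteq> cc L (sucL L p) \<and> cc L (preL L p) \<noteq> cc L (sucL L p)"
proof -
  obtain k where k: "L = 2 * k" using assms(1) by blast
  have k2: "k \<ge> 2" using assms(2) k by simp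
  consider (z) "p = 0" | (l) "p + 1 = L" | (m) "0 < p" "p + 1 < L" using assms(3) by linarith
  note cases = this
  show ?thesis
  proof (cases "even k")
    case True
    then obtain m where m: "k = 2 * m" by blast
    have d: "4 dvd L" using k m by simp
    have c: "cc L q = q mod 4" for q using d unfolding cc_def by simp
    show ?thesis
    proof (cases rule: cases)
      case z
      have "L - 1 = 4 * (m - 1) + 3" using k m k2 by simp
      then have "(L - 1) mod 4 = 3" using mod4r[of 3 "m - 1"] by simp
      then show ?thesis using z k2 k unfolding c preL_def sucL_def by simp
    next
      case l
      have "L - 1 = 4 * (m - 1) + 3" "L - 2 = 4 * (m - 1) + 2" using k m k2 by simp_all
      then have "(L - 1) mod 4 = 3" "(L - 2) mod 4 = 2" using mod4r[of 3 "m - 1"] mod4r[of 2 "m - 1"] by simp_all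
      moreover have "p - 1 = L - 2" "p = L - 1" using l by simp_all
      ultimately show ?thesis using l k2 k unfolding c preL_def sucL_def by simp
    next
      case m
      then obtain q where q: "p = Suc q" by (cases p) auto
      show ?thesis using m m4[of q] unfolding c preL_def sucL_def q by simp
    qed
  next
    case False
    then obtain m where m: "k = 2 * m + 1" using oddE by blast
    have m1: "m \<ge> 1" using k2 m by simp
    have "L = 4 * m + 2" using k m by simp
    then have "L mod 4 = 2" using mod4r[of 2 m] by simp
    then have d: "\<not> 4 dvd L" by (auto simp: dvd_eq_mod_eq_0)
    have c: "cc L q = (if q + 6 < L then q mod 4 else (q + 6 - L) mod 3)" for q using d unfolding cc_def by simp
    have L6: "L \<ge> 6" using k m m1 by simp
    have L7: "L \<noteq> 7" using assms(1) by auto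
    show ?thesis
    proof (cases rule: cases)
      case z
      have "cc L (L - 1) = 2" unfolding c using L6 by simp
      moreover have "cc L 0 = 0" unfolding c using L6 by (cases "L = 6") auto
      moreover have "cc L 1 = 1" unfolding c using L6 L7 by (cases "L = 6") auto
      ultimately show ?thesis using z L6 unfolding preL_def sucL_def by simp
    next
      case l
      have "cc L (L - 2) = 1" unfolding c using L6 by simp
      moreover have "cc L (L - 1) = 2" unfolding c using L6 by simp
      moreover have "cc L 0 = 0" unfolding c using L6 by (cases "L = 6") auto
      moreover have "p - 1 = L - 2" "p = L - 1" using l by simp_all
      ultimately show ?thesis using l L6 unfolding preL_def sucL_def by simp
    next
      case mid: m
      then obtain q where q: "p = Suc q" by (cases p) auto
      have pre: "preL L p = q" and suc: "sucL L p = Suc (Suc q)" using mid q unfolding preL_def sucL_def by auto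
      consider (ca) "q + 8 < L" | (cb) "q + 8 = L" | (cd) "q + 7 = L" | (ce) "q + 6 \<ge> L" by linarith
      then show ?thesis
      proof cases
        case ca
        then show ?thesis unfolding pre suc unfolding q c using m4[of q] by simp
      next
        case cb
        have "q = 4 * (m - 2) + 2" using cb k m by simp
        then have "q mod 4 = 2" using mod4r[of 2 "m - 2"] by simp
        then have "Suc q mod 4 = 3" by (simp add: mod_Suc)
        then show ?thesis unfolding pre suc unfolding q c using cb \<open>q mod 4 = 2\<close> by simp
      next
        case cd
        have "q = 4 * (m - 2) + 3" using cd k m by simp
        then have "q mod 4 = 3" using mod4r[of 3 "m - 2"] by simp
        then show ?thesis unfolding pre suc unfolding q c using cd by simp
      next
        case ce
        have "q + 6 - L = q + 6 - L" by simp
        obtain r where r: "r = q + 6 - L" by blast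
        have "Suc q + 6 - L = Suc r" "Suc (Suc q) + 6 - L = Suc (Suc r)" using r ce by simp_all
        then show ?thesis unfolding pre suc unfolding q c using ce m3[of r] r by simp
      qed
    qed
  qed
qed

lemma cc_01: assumes "L \<ge> 4" "even L" shows "cc L 0 \<noteq> cc L 1"
proof -
  have L7: "L \<noteq> 7" "L \<noteq> 5" using assms(2) by auto
  show ?thesis
  proof (cases "L = 4")
    case True then show ?thesis unfolding cc_def by simp
  next
    case False
    then have "L \<ge> 6" using assms L7 by linarith
    then show ?thesis unfolding cc_def using L7 by (cases "L = 6") auto
  qed
qed

lemma cc_lt: "cc L p < 4"
  unfolding cc_def by auto



lemma sucL_lt: "p < L \<Longrightarrow> sucL L p < L" unfolding sucL_def by auto
lemma preL_lt: "p < L \<Longrightarrow> preL L p < L" unfolding preL_def by auto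
lemma sucL_ne: "p < L \<Longrightarrow> L \<ge> 3 \<Longrightarrow> sucL L p \<noteq> p" unfolding sucL_def by auto
lemma preL_ne: "p < L \<Longrightarrow> L \<ge> 3 \<Longrightarrow> preL L p \<noteq> p" unfolding preL_def by auto
lemma sucL_preL_ne: "p < L \<Longrightarrow> L \<ge> 3 \<Longrightarrow> sucL L p \<noteq> preL L p" unfolding sucL_def preL_def by auto
lemma Suc_mod_sucL: "p < L \<Longrightarrow> Suc p mod L = sucL L p" unfolding sucL_def by auto
lemma sucL_preL_iff: "p < L \<Longrightarrow> q < L \<Longrightarrow> (p = sucL L q) \<longleftrightarrow> (q = preL L p)"
  unfolding sucL_def preL_def by auto
lemma even_sucL: "even L \<Longrightarrow> p < L \<Longrightarrow> even (sucL L p) \<longleftrightarrow> odd p"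
  unfolding sucL_def by auto
lemma even_preL: "even L \<Longrightarrow> p < L \<Longrightarrow> L \<ge> 2 \<Longrightarrow> even (preL L p) \<longleftrightarrow> odd p"
  unfolding preL_def by (auto simp: even_diff_nat)

lemma cycle_adj_iff:
  assumes "p < L" "q < L"
  shows "{p, q} \<in> edges (cycle L) \<longleftrightarrow> q = sucL L p \<or> q = preL L p"
  unfolding cycle_edge_iff using assms Suc_mod_sucL sucL_preL_iff by metis

definition Nc :: "'x set \<Rightarrow> nat \<Rightarrow> (nat \<Rightarrow> 'f::field) \<Rightarrow> ('x \<Rightarrow> 'x \<Rightarrow> 'f) \<Rightarrow> ('x \<times> nat) \<Rightarrow> ('x \<times> nat) \<Rightarrow> 'f" where
  "Nc VX L t K u v = (if fst u \<in> VX \<and> fst v \<in> VX \<and> snd u < L \<and> snd v < L then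
     (if snd v = snd u then (t (preL L (snd u)) - t (sucL L (snd u))) * K (fst u) (fst v)
      else if fst v = fst u \<and> snd v = sucL L (snd u) then t (snd u) - t (preL L (snd u))
      else if fst v = fst u \<and> snd v = preL L (snd u) then t (sucL L (snd u)) - t (snd u)
      else 0) else 0)"

definition kc :: "('x \<Rightarrow> 'x \<Rightarrow> 'f::field) \<Rightarrow> (nat \<Rightarrow> 'f) \<Rightarrow> ('x \<times> bool) \<Rightarrow> ('x \<times> nat) \<Rightarrow> 'f" where
  "kc K t z v = (if snd z then t (snd v) else 1) *
     (if even (snd v) then (if fst v = fst z then 1 else 0) else K (fst v) (fst z))"

lemma bracket:
  fixes t :: "nat \<Rightarrow> 'f::field"
  shows "(t a - t c) * (if j then t b else 1) + (t b - t a) * (if j then t c else 1) + (t c - t b) * (if j then t a else 1) = 0"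
  by (cases j) (simp_all add: algebra_simps)

lemma sum_three:
  assumes fin: "finite A" and sub: "{a, b, c} \<subseteq> A" and dist: "a \<noteq> b" "a \<noteq> c" "b \<noteq> c"
    and z: "\<And>q. q \<in> A \<Longrightarrow> q \<notin> {a, b, c} \<Longrightarrow> F q = 0"
  shows "sum F A = F a + F b + F c"
proof -
  have "sum F A = sum F {a, b, c}"
    using fin sub z by (intro sum.mono_neutral_right) auto
  also have "\<dots> = F a + F b + F c" using dist by (simp add: add.assoc)
  finally show ?thesis .
qed

lemma lower_cycle:
  fixes K :: "'x \<Rightarrow> 'x \<Rightarrow> 'f::field" and t :: "nat \<Rightarrow> 'f" and cX :: "'x \<Rightarrow> bool"
  assumes sgX: "simple_graph X" and colX: "\<forall>u v. {u,v} \<in> edges X \<longrightarrow> cX u \<noteq> cX v"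
    and K: "K \<in> invol_adj X" and L: "even L" "L \<ge> 4"
    and tdist: "\<forall>p<L. t (preL L p) \<noteq> t p \<and> t p \<noteq> t (sucL L p) \<and> t (preL L p) \<noteq> t (sucL L p)"
    and t01: "t 0 \<noteq> t 1"
    and pm: "perfect_matching (cart X (cycle L)) M"
    and fs: "forcing_set (cart X (cycle L)) M S"
  shows "card (verts X) \<le> card S"
proof -
  define VX where "VX = verts X"
  have finVX: "finite VX" using sgX unfolding simple_graph_def VX_def by simp
  note Kd = invol_adjD[OF K]
  define H where "H = cart X (cycle L)"
  have sgH: "simple_graph H" unfolding H_def using simple_cart[OF sgX simple_cycle] L by simp
  have vH: "verts H = VX \<times> {0..<L}" unfolding H_def VX_def by simp
  have colH: "\<forall>u v. {u,v} \<in> edges H \<longrightarrow> (\<lambda>(x,p). cX x \<noteq> odd p) u \<noteq> (\<lambda>(x,p). cX x \<noteq> odd p) v"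
  proof (intro allI impI)
    fix u v assume e: "{u,v} \<in> edges H"
    obtain x p y q where uv: "u = (x,p)" "v = (y,q)" by (cases u, cases v) auto
    have "(x = y \<and> x \<in> VX \<and> {p,q} \<in> edges (cycle L)) \<or> (p = q \<and> p \<in> verts (cycle L) \<and> {x,y} \<in> edges X)"
      using e unfolding uv H_def cart_edge_iff VX_def by simp
    then show "(\<lambda>(x,p). cX x \<noteq> odd p) u \<noteq> (\<lambda>(x,p). cX x \<noteq> odd p) v"
    proof
      assume a: "x = y \<and> x \<in> VX \<and> {p,q} \<in> edges (cycle L)"
      then have "(p < L \<and> q = Suc p mod L) \<or> (q < L \<and> p = Suc q mod L)" using cycle_edge_iff by metis
      then have "odd p \<noteq> odd q" using L Suc_mod_sucL even_sucL by metis
      then show ?thesis using a uv by simp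
    next
      assume "p = q \<and> p \<in> verts (cycle L) \<and> {x,y} \<in> edges X"
      then show ?thesis using colX uv by auto
    qed
  qed
  define N where "N = Nc VX L t K"
  have Kz: "K x y \<noteq> 0 \<longleftrightarrow> {x,y} \<in> edges X" if "x \<in> VX" "y \<in> VX" for x y using Kd(2) that VX_def by simp
  have wa: "weighted_adj H N"
    unfolding weighted_adj_def
  proof (intro conjI allI impI ballI)
    fix u v assume "u \<notin> verts H \<or> v \<notin> verts H"
    then show "N u v = 0" unfolding N_def Nc_def vH by (cases u, cases v) auto
  next
    fix u v assume u: "u \<in> verts H" and v: "v \<in> verts H"
    obtain x p where xp: "u = (x,p)" "x \<in> VX" "p < L" using u vH by (cases u) auto
    obtain y q where yq: "v = (y,q)" "y \<in> VX" "q < L" using v vH by (cases v) auto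
    have td: "t (preL L p) \<noteq> t p" "t p \<noteq> t (sucL L p)" "t (preL L p) \<noteq> t (sucL L p)" using tdist xp(3) by auto
    have "adjacent H u v \<longleftrightarrow> (x = y \<and> {p,q} \<in> edges (cycle L)) \<or> (p = q \<and> {x,y} \<in> edges X)"
      unfolding adjacent_def H_def xp yq cart_edge_iff using xp yq VX_def by auto
    also have "\<dots> \<longleftrightarrow> (x = y \<and> (q = sucL L p \<or> q = preL L p)) \<or> (p = q \<and> {x,y} \<in> edges X)"
      using cycle_adj_iff[OF xp(3) yq(3)] by simp
    also have "\<dots> \<longleftrightarrow> N u v \<noteq> 0"
    proof (cases "q = p")
      case True
      have L3: "L \<ge> 3" using L by simp
      have "q \<noteq> sucL L p" "q \<noteq> preL L p" using sucL_ne[OF xp(3) L3] preL_ne[OF xp(3) L3] True by auto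
      then show ?thesis unfolding N_def Nc_def xp yq using True xp yq td Kz by auto
    next
      case False
      have "sucL L p \<noteq> preL L p" using sucL_preL_ne xp(3) L by auto
      then show ?thesis unfolding N_def Nc_def xp yq using False xp yq td by auto
    qed
    finally show "N u v \<noteq> 0 \<longleftrightarrow> adjacent H u v" by simp
  qed
  define Z where "Z = VX \<times> (UNIV :: bool set)"
  have finZ: "finite Z" using finVX Z_def by simp
  have invK: "(\<Sum>y\<in>VX. K x y * K y z) = (if x = z then 1 else 0)" if "x \<in> VX" "z \<in> VX" for x z
    using Kd(3) that VX_def by simp
  have kern: "\<forall>z\<in>Z. \<forall>v\<in>verts H. (\<Sum>u\<in>verts H. N v u * kc K t z u) = 0"
  proof (intro ballI)
    fix zj v assume zj: "zj \<in> Z" and v: "v \<in> verts H"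
    obtain z j where zj': "zj = (z, j)" "z \<in> VX" using zj Z_def by auto
    obtain x p where xp: "v = (x,p)" "x \<in> VX" "p < L" using v vH by (cases v) auto
    define s where "s = sucL L p"
    define r where "r = preL L p"
    have sr: "s < L" "r < L" "s \<noteq> p" "r \<noteq> p" "s \<noteq> r"
      using sucL_lt preL_lt sucL_ne preL_ne sucL_preL_ne xp(3) L unfolding s_def r_def by auto
    define F where "F q = (\<Sum>y\<in>VX. N (x,p) (y,q) * kc K t zj (y,q))" for q
    define \<sigma> where "\<sigma> q = (if j then t q else 1)" for q
    have "(\<Sum>u\<in>verts H. N v u * kc K t zj u) = (\<Sum>y\<in>VX. \<Sum>q\<in>{0..<L}. N (x,p) (y,q) * kc K t zj (y,q))"
      unfolding vH xp by (simp add: sum.cartesian_product)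
    also have "\<dots> = (\<Sum>q\<in>{0..<L}. F q)" unfolding F_def by (rule sum.swap)
    also have "\<dots> = F p + F s + F r"
    proof (rule sum_three)
      show "{p, s, r} \<subseteq> {0..<L}" using sr xp by auto
      show "p \<noteq> s" "p \<noteq> r" "s \<noteq> r" using sr by auto
      fix q assume "q \<in> {0..<L}" "q \<notin> {p, s, r}"
      then have "N (x,p) (y,q) = 0" for y unfolding N_def Nc_def s_def r_def by auto
      then show "F q = 0" unfolding F_def by simp
    qed simp
    also have "\<dots> = 0"
    proof -
      have Fp: "F p = (t r - t s) * (\<Sum>y\<in>VX. K x y * kc K t zj (y,p))"
        unfolding F_def N_def Nc_def r_def s_def using xp by (simp add: sum_distrib_left mult.assoc cong: sum.cong)
      have Fs: "F s = (t p - t r) * kc K t zj (x,s)"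
      proof -
        have "F s = (\<Sum>y\<in>VX. if y = x then (t p - t r) * kc K t zj (y,s) else 0)"
          unfolding F_def N_def Nc_def using xp sr unfolding r_def s_def by (intro sum.cong refl) auto
        then show ?thesis using xp finVX by (simp add: sum.delta')
      qed
      have Fr: "F r = (t s - t p) * kc K t zj (x,r)"
      proof -
        have "F r = (\<Sum>y\<in>VX. if y = x then (t s - t p) * kc K t zj (y,r) else 0)"
          unfolding F_def N_def Nc_def using xp sr unfolding r_def s_def by (intro sum.cong refl) auto
        then show ?thesis using xp finVX by (simp add: sum.delta')
      qed
      have pars: "even s \<longleftrightarrow> odd p" "even r \<longleftrightarrow> odd p"
        using even_sucL even_preL L xp(3) unfolding s_def r_def by auto
      show ?thesis
      proof (cases "even p")
        case True
        have "(\<Sum>y\<in>VX. K x y * kc K t zj (y,p)) = (\<Sum>y\<in>VX. if y = z then \<sigma> p * K x y else 0)"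
          unfolding kc_def zj' \<sigma>_def using True by (intro sum.cong refl) auto
        also have "\<dots> = \<sigma> p * K x z" using zj'(2) finVX by (simp add: sum.delta')
        finally have "F p = (t r - t s) * (\<sigma> p * K x z)" using Fp by simp
        moreover have "kc K t zj (x,s) = \<sigma> s * K x z" "kc K t zj (x,r) = \<sigma> r * K x z"
          unfolding kc_def zj' \<sigma>_def using pars True by auto
        ultimately have "F p + F s + F r = (t r - t s) * (\<sigma> p * K x z) + (t p - t r) * (\<sigma> s * K x z) + (t s - t p) * (\<sigma> r * K x z)"
          using Fs Fr by simp
        also have "\<dots> = K x z * ((t r - t s) * \<sigma> p + (t p - t r) * \<sigma> s + (t s - t p) * \<sigma> r)"
          by (simp add: algebra_simps)
        finally have "F p + F s + F r = K x z * ((t r - t s) * \<sigma> p + (t p - t r) * \<sigma> s + (t s - t p) * \<sigma> r)" .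
        then show ?thesis using bracket[of t r s j p] unfolding \<sigma>_def by simp
      next
        case False
        have "(\<Sum>y\<in>VX. K x y * kc K t zj (y,p)) = \<sigma> p * (\<Sum>y\<in>VX. K x y * K y z)"
          unfolding kc_def zj' \<sigma>_def using False by (simp add: sum_distrib_left mult.left_commute)
        also have "\<dots> = \<sigma> p * (if x = z then 1 else 0)" using invK[OF xp(2) zj'(2)] by simp
        finally have "F p = (t r - t s) * (\<sigma> p * (if x = z then 1 else 0))" using Fp by simp
        moreover have "kc K t zj (x,s) = \<sigma> s * (if x = z then 1 else 0)" "kc K t zj (x,r) = \<sigma> r * (if x = z then 1 else 0)"
          unfolding kc_def zj' \<sigma>_def using pars False by auto
        ultimately have "F p + F s + F r = (t r - t s) * (\<sigma> p * (if x = z then 1 else 0)) + (t p - t r) * (\<sigma> s * (if x = z then 1 else 0)) + (t s - t p) * (\<sigma> r * (if x = z then 1 else 0))"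
          using Fs Fr by simp
        also have "\<dots> = (if x = z then 1 else 0) * ((t r - t s) * \<sigma> p + (t p - t r) * \<sigma> s + (t s - t p) * \<sigma> r)"
          by (simp add: algebra_simps)
        finally have "F p + F s + F r = (if x = z then 1 else 0) * ((t r - t s) * \<sigma> p + (t p - t r) * \<sigma> s + (t s - t p) * \<sigma> r)" .
        then show ?thesis using bracket[of t r s j p] unfolding \<sigma>_def by simp
      qed
    qed
    finally show "(\<Sum>u\<in>verts H. N v u * kc K t zj u) = 0" .
  qed
  have indep: "\<forall>b. (\<forall>v\<in>verts H. (\<Sum>z\<in>Z. b z * kc K t z v) = 0) \<longrightarrow> (\<forall>z\<in>Z. b z = 0)"
  proof (intro allI impI)
    fix \<beta> :: "'x \<times> bool \<Rightarrow> 'f"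
    assume h: "\<forall>v\<in>verts H. (\<Sum>z\<in>Z. \<beta> z * kc K t z v) = 0"
    have sumZ: "(\<Sum>z\<in>Z. \<beta> z * kc K t z v) = (\<Sum>y\<in>VX. \<beta> (y,False) * kc K t (y,False) v + \<beta> (y,True) * kc K t (y,True) v)" for v
      unfolding Z_def sum.cartesian_product' UNIV_bool by (simp add: add.commute)
    have e0: "\<beta> (x,False) + t 0 * \<beta> (x,True) = 0" if x: "x \<in> VX" for x
    proof -
      have "(x, 0) \<in> verts H" using x vH L by simp
      then have "0 = (\<Sum>y\<in>VX. \<beta> (y,False) * kc K t (y,False) (x,0) + \<beta> (y,True) * kc K t (y,True) (x,0))"
        using h sumZ by simp
      also have "\<dots> = (\<Sum>y\<in>VX. if y = x then \<beta> (y,False) + t 0 * \<beta> (y,True) else 0)"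
        unfolding kc_def by (intro sum.cong refl) (auto simp: mult.commute)
      also have "\<dots> = \<beta> (x,False) + t 0 * \<beta> (x,True)" using x finVX by (simp add: sum.delta')
      finally show ?thesis by simp
    qed
    define c where "c y = \<beta> (y,False) + t 1 * \<beta> (y,True)" for y
    have e1: "(\<Sum>z\<in>VX. K y z * c z) = 0" if y: "y \<in> VX" for y
    proof -
      have "(y, 1) \<in> verts H" using y vH L by simp
      then have "0 = (\<Sum>z\<in>VX. \<beta> (z,False) * kc K t (z,False) (y,1) + \<beta> (z,True) * kc K t (z,True) (y,1))"
        using h sumZ by simp
      also have "\<dots> = (\<Sum>z\<in>VX. K y z * c z)"
        unfolding kc_def c_def by (intro sum.cong refl) (auto simp: algebra_simps)
      finally show ?thesis by simp
    qed
    have c0: "c x = 0" if x: "x \<in> VX" for x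
    proof -
      have "0 = (\<Sum>y\<in>VX. K x y * (\<Sum>z\<in>VX. K y z * c z))" using e1 by simp
      also have "\<dots> = (\<Sum>y\<in>VX. \<Sum>z\<in>VX. K x y * (K y z * c z))"
        by (simp add: sum_distrib_left)
      also have "\<dots> = (\<Sum>z\<in>VX. \<Sum>y\<in>VX. K x y * (K y z * c z))"
        by (rule sum.swap)
      also have "\<dots> = (\<Sum>z\<in>VX. (\<Sum>y\<in>VX. K x y * K y z) * c z)"
        by (simp add: sum_distrib_right mult.assoc)
      also have "\<dots> = (\<Sum>z\<in>VX. if z = x then c z else 0)"
        using invK[OF x] by (intro sum.cong refl) auto
      also have "\<dots> = c x" using x finVX by (simp add: sum.delta')
      finally show ?thesis by simp
    qed
    show "\<forall>z\<in>Z. \<beta> z = 0"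
    proof
      fix zj assume "zj \<in> Z"
      then obtain x j where xj: "zj = (x,j)" "x \<in> VX" using Z_def by auto
      have "(t 0 - t 1) * \<beta> (x,True) = (\<beta> (x,False) + t 0 * \<beta> (x,True)) - (\<beta> (x,False) + t 1 * \<beta> (x,True))"
        by (simp add: algebra_simps)
      also have "\<dots> = 0" using e0[OF xj(2)] c0[OF xj(2)] unfolding c_def by simp
      finally have "(t 0 - t 1) * \<beta> (x,True) = 0" .
      then have bT: "\<beta> (x,True) = 0" using t01 by simp
      then have "\<beta> (x,False) = 0" using e0[OF xj(2)] by simp
      then show "\<beta> zj = 0" using bT xj by (cases j) auto
    qed
  qed
  have "card Z \<le> 2 * card S"
    by (rule forcing_lower[OF sgH colH wa finZ kern indep pm[folded H_def] fs[folded H_def]])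
  moreover have "card Z = 2 * card VX" unfolding Z_def using finVX by (simp add: card_cartesian_product)
  ultimately show ?thesis unfolding VX_def by simp
qed



lemma pm_sub_eq:
  assumes sg: "simple_graph H" and pm: "perfect_matching H M" and pm': "perfect_matching H M'"
    and sub: "M \<subseteq> M'"
  shows "M' = M"
proof
  show "M' \<subseteq> M"
  proof
    fix e' assume e': "e' \<in> M'"
    have "e' \<in> edges H" using e' pmD(1)[OF pm'] by blast
    then have c2: "card e' = 2" and eV: "e' \<subseteq> verts H" using simple_graphD[OF sg] by auto
    then obtain v where v: "v \<in> e'" by (cases "e' = {}") auto
    have vV: "v \<in> verts H" using v eV by blast
    obtain e where e: "e \<in> M" "v \<in> e" using pmD(2)[OF pm vV] by blast
    have "e \<in> M'" using e sub by blast
    then have "e = e'" using pmD(2)[OF pm' vV] e v e' by blast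
    then show "e' \<in> M" using e by simp
  qed
qed (rule sub)

lemma fn_le:
  assumes "perfect_matching H M" "forcing_set H M S"
  shows "forcing_number H \<le> card S"
proof -
  have "forcing_number_of H M \<le> card S"
    unfolding forcing_number_of_def using assms(2) by (intro Least_le) blast
  moreover have "forcing_number H \<le> forcing_number_of H M"
    unfolding forcing_number_def using assms(1) by (intro Least_le) blast
  ultimately show ?thesis by simp
qed

lemma fn_ge:
  assumes sg: "simple_graph H" and pm0: "perfect_matching H M0"
    and lb: "\<And>M S. perfect_matching H M \<Longrightarrow> forcing_set H M S \<Longrightarrow> B \<le> card S"
  shows "B \<le> forcing_number H"
proof -
  have "\<exists>M. perfect_matching H M \<and> forcing_number_of H M = forcing_number H"
    unfolding forcing_number_def by (rule LeastI[of _ "forcing_number_of H M0"]) (use pm0 in blast)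
  then obtain M where M: "perfect_matching H M" "forcing_number_of H M = forcing_number H" by blast
  have fsM: "forcing_set H M M"
    unfolding forcing_set_def using pm_sub_eq[OF sg M(1)] by blast
  have "\<exists>S. forcing_set H M S \<and> card S = forcing_number_of H M"
    unfolding forcing_number_of_def by (rule LeastI[of _ "card M"]) (use fsM in blast)
  then obtain S where S: "forcing_set H M S" "card S = forcing_number H" using M(2) by auto
  have "B \<le> card S" by (rule lb[OF M(1) S(1)])
  then show ?thesis using S(2) by simp
qed



definition pr1 :: "('a \<times> bool list) \<Rightarrow> ('a \<times> bool list) set" where
  "pr1 z = {(fst z, False # snd z), (fst z, True # snd z)}"

lemma pr1_inj: "inj pr1"
  unfolding pr1_def inj_def by (auto simp: doubleton_eq_iff)

lemma mem_pr1: "(g, bs) \<in> pr1 z \<longleftrightarrow> g = fst z \<and> (bs = False # snd z \<or> bs = True # snd z)"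
  unfolding pr1_def by auto

lemma upper_d:
  fixes c :: "'a \<Rightarrow> bool"
  assumes sg: "simple_graph G" and col: "\<forall>u v. {u,v} \<in> edges G \<longrightarrow> c u \<noteq> c v"
  shows "perfect_matching (cart G (hypercube (Suc d))) (pr1 ` (verts G \<times> {ys. length ys = d}))
     \<and> forcing_set (cart G (hypercube (Suc d))) (pr1 ` (verts G \<times> {ys. length ys = d}))
         (pr1 ` {z \<in> verts G \<times> {ys. length ys = d}. c (fst z) \<noteq> par (snd z)})"
proof -
  define H where "H = cart G (hypercube (Suc d))"
  define I where "I = verts G \<times> {ys :: bool list. length ys = d}"
  define M1 where "M1 = pr1 ` I"
  define S1 where "S1 = pr1 ` {z \<in> I. c (fst z) \<noteq> par (snd z)}"
  have sgH: "simple_graph H" unfolding H_def by (rule simple_cart[OF sg simple_hyp])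
  have vH: "verts H = verts G \<times> {zs. length zs = Suc d}" unfolding H_def by simp
  have vform: "\<exists>g b ys. v = (g, b # ys) \<and> g \<in> verts G \<and> length ys = d" if "v \<in> verts H" for v
    using that vH by (cases v) (auto simp: length_Suc_conv)
  have pm: "perfect_matching H M1"
    unfolding perfect_matching_def
  proof (intro conjI ballI)
    show "M1 \<subseteq> edges H"
    proof
      fix e assume "e \<in> M1"
      then obtain g ys where gy: "g \<in> verts G" "length ys = d" "e = pr1 (g, ys)" unfolding M1_def I_def by auto
      show "e \<in> edges H" unfolding gy pr1_def H_def using gy by (simp add: cart_edge_iff hyp_edge_iff)
    qed
  next
    fix v assume v: "v \<in> verts H"
    then obtain g b ys where gy: "v = (g, b # ys)" "g \<in> verts G" "length ys = d" using vform by blast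
    show "\<exists>!e. e \<in> M1 \<and> v \<in> e"
    proof (rule ex1I[of _ "pr1 (g, ys)"])
      have "pr1 (g, ys) \<in> M1" unfolding M1_def I_def using gy by (intro imageI) auto
      moreover have "v \<in> pr1 (g, ys)" unfolding gy by (cases b) (auto simp: pr1_def)
      ultimately show "pr1 (g, ys) \<in> M1 \<and> v \<in> pr1 (g, ys)" by blast
    next
      fix e assume "e \<in> M1 \<and> v \<in> e"
      then obtain z where "z \<in> I" "e = pr1 z" "v \<in> pr1 z" unfolding M1_def by blast
      then show "e = pr1 (g, ys)" unfolding gy mem_pr1 by (cases z) auto
    qed
  qed
  have memS: "(g, b # ys) \<in> \<Union>S1 \<longleftrightarrow> c g \<noteq> par ys" if "g \<in> verts G" "length ys = d" for g b ys
  proof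
    assume "(g, b # ys) \<in> \<Union>S1"
    then obtain z where "z \<in> I" "c (fst z) \<noteq> par (snd z)" "(g, b # ys) \<in> pr1 z" unfolding S1_def by blast
    then show "c g \<noteq> par ys" unfolding mem_pr1 by auto
  next
    assume "c g \<noteq> par ys"
    then have "pr1 (g, ys) \<in> S1" unfolding S1_def I_def using that by auto
    moreover have "(g, b # ys) \<in> pr1 (g, ys)" unfolding mem_pr1 by (cases b) auto
    ultimately show "(g, b # ys) \<in> \<Union>S1" by blast
  qed
  have SM: "S1 \<subseteq> M1" unfolding S1_def M1_def by blast
  have fs: "forcing_set H M1 S1"
    unfolding forcing_set_def
  proof (intro conjI allI impI)
    show "S1 \<subseteq> M1" by (rule SM)
  next
    fix M' assume M': "perfect_matching H M' \<and> S1 \<subseteq> M'"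
    have uniq: "e1 = e2" if "e1 \<in> M'" "e2 \<in> M'" "v \<in> e1" "v \<in> e2" "v \<in> verts H" for e1 e2 v
      using pmD(2)[of H M' v] M' that by blast
    have "M' \<subseteq> M1"
    proof
      fix e' assume e': "e' \<in> M'"
      have eH: "e' \<in> edges H" using e' M' pmD(1) by blast
      then obtain u w where uw: "e' = {u, w}" unfolding H_def using cart_edge_form by blast
      have uV: "u \<in> verts H" and wV: "w \<in> verts H" using simple_graphD(2)[OF sgH eH] uw by auto
      show "e' \<in> M1"
      proof (cases "u \<in> \<Union>S1 \<or> w \<in> \<Union>S1")
        case True
        then obtain eS x where eS: "eS \<in> S1" "x \<in> eS" "x \<in> e'" "x \<in> verts H" using uw uV wV by blast
        have "eS \<in> M'" using eS M' by blast
        then have "e' = eS" using uniq[OF e' _ eS(3) eS(2) eS(4)] by blast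
        then show ?thesis using eS SM by blast
      next
        case False
        obtain g b ys where u': "u = (g, b # ys)" "g \<in> verts G" "length ys = d" using vform[OF uV] by blast
        obtain g' b' ys' where w': "w = (g', b' # ys')" "g' \<in> verts G" "length ys' = d" using vform[OF wV] by blast
        have cu: "c g = par ys" using False memS[OF u'(2,3)] u' by blast
        have cw: "c g' = par ys'" using False memS[OF w'(2,3)] w' by blast
        have "{(g, b # ys), (g', b' # ys')} \<in> edges (cart G (hypercube (Suc d)))"
          using eH uw u' w' H_def by simp
        then have "(g = g' \<and> g \<in> verts G \<and> {b # ys, b' # ys'} \<in> edges (hypercube (Suc d))) \<or>
            (b # ys = b' # ys' \<and> b # ys \<in> verts (hypercube (Suc d)) \<and> {g, g'} \<in> edges G)"
          by (simp only: cart_edge_iff)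
        then have "(g = g' \<and> dist1 (b # ys) (b' # ys')) \<or> (b # ys = b' # ys' \<and> {g, g'} \<in> edges G)"
          unfolding hyp_edge_iff by blast
        then show ?thesis
        proof
          assume a: "g = g' \<and> dist1 (b # ys) (b' # ys')"
          show ?thesis
          proof (cases "b = b'")
            case True
            then have "dist1 ys ys'" using a by simp
            then have "par ys \<noteq> par ys'" by (rule dist1_par)
            then show ?thesis using cu cw a by simp
          next
            case False
            then have "ys = ys'" using a by simp
            then have "e' = pr1 (g, ys)" unfolding uw u' w' pr1_def using a False by (cases b; cases b') auto
            then show ?thesis unfolding M1_def I_def using u' by auto
          qed
        next
          assume "b # ys = b' # ys' \<and> {g, g'} \<in> edges G"
          then show ?thesis using cu cw col by auto
        qed
      qed
    qed
    then show "M' = M1" using pm_sub_eq[OF sgH _ pm] M' by blast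
  qed
  show ?thesis using pm fs unfolding H_def M1_def S1_def I_def by simp
qed

lemma card_S1_split:
  fixes c :: "'a \<Rightarrow> bool"
  assumes fin: "finite V"
  shows "card (pr1 ` {z \<in> V \<times> {ys. length ys = d}. c (fst z) \<noteq> par (snd z)})
       + card (pr1 ` {z \<in> V \<times> {ys. length ys = d}. (\<not> c (fst z)) \<noteq> par (snd z)}) = card V * 2 ^ d"
proof -
  define I where "I = V \<times> {ys :: bool list. length ys = d}"
  have finI: "finite I" unfolding I_def using fin finite_Ld by simp
  have "card (pr1 ` {z \<in> I. c (fst z) \<noteq> par (snd z)}) = card {z \<in> I. c (fst z) \<noteq> par (snd z)}"
    by (rule card_image) (rule inj_on_subset[OF pr1_inj], simp)
  moreover have "card (pr1 ` {z \<in> I. (\<not> c (fst z)) \<noteq> par (snd z)}) = card {z \<in> I. (\<not> c (fst z)) \<noteq> par (snd z)}"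
    by (rule card_image) (rule inj_on_subset[OF pr1_inj], simp)
  moreover have "card {z \<in> I. c (fst z) \<noteq> par (snd z)} + card {z \<in> I. (\<not> c (fst z)) \<noteq> par (snd z)} = card I"
  proof -
    define A where "A = {z \<in> I. c (fst z) \<noteq> par (snd z)}"
    have eq: "{z \<in> I. (\<not> c (fst z)) \<noteq> par (snd z)} = I - A" unfolding A_def by auto
    have AI: "A \<subseteq> I" unfolding A_def by blast
    have finA: "finite A" using finite_subset[OF AI finI] .
    have "card (I - A) = card I - card A" using card_Diff_subset[OF finA AI] .
    moreover have "card A \<le> card I" using card_mono[OF finI AI] .
    ultimately show ?thesis unfolding eq A_def[symmetric] by simp
  qed
  moreover have "card I = card V * 2 ^ d" unfolding I_def by (simp add: card_cartesian_product card_Ld)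
  ultimately show ?thesis unfolding I_def by simp
qed



definition FE :: "nat \<Rightarrow> 'x \<Rightarrow> nat \<Rightarrow> ('x \<times> nat) set" where
  "FE L x q = {(x, q), (x, sucL L q)}"

definition ii :: "('x \<Rightarrow> bool) \<Rightarrow> 'x \<Rightarrow> nat" where "ii c x = (if c x then 1 else 0)"

lemma sucL_preL: "q < L \<Longrightarrow> sucL L (preL L q) = q" unfolding sucL_def preL_def by auto

lemma upper_cycle:
  fixes c :: "'x \<Rightarrow> bool"
  assumes sgX: "simple_graph X" and col: "\<forall>u v. {u,v} \<in> edges X \<longrightarrow> c u \<noteq> c v"
    and L: "even L" "L \<ge> 4"
  shows "perfect_matching (cart X (cycle L)) ((\<lambda>(x,q). FE L x q) ` {(x,q). x \<in> verts X \<and> q < L \<and> q mod 2 = ii c x})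
    \<and> forcing_set (cart X (cycle L)) ((\<lambda>(x,q). FE L x q) ` {(x,q). x \<in> verts X \<and> q < L \<and> q mod 2 = ii c x})
         ((\<lambda>x. FE L x (ii c x)) ` verts X)"
proof -
  define H where "H = cart X (cycle L)"
  define VX where "VX = verts X"
  define M2 where "M2 = (\<lambda>(x,q). FE L x q) ` {(x,q). x \<in> VX \<and> q < L \<and> q mod 2 = ii c x}"
  define S2 where "S2 = (\<lambda>x. FE L x (ii c x)) ` VX"
  have L3: "L \<ge> 3" using L by simp
  have sgH: "simple_graph H" unfolding H_def using simple_cart[OF sgX simple_cycle[OF L3]] .
  have vH: "verts H = VX \<times> {0..<L}" unfolding H_def VX_def by simp
  have ii2: "ii c x < 2" "ii c x mod 2 = ii c x" for x unfolding ii_def by auto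
  have FEedge: "FE L x q \<in> edges H" if "x \<in> VX" "q < L" for x q
  proof -
    have "{q, sucL L q} \<in> edges (cycle L)" using cycle_adj_iff[OF that(2) sucL_lt[OF that(2)]] by simp
    then show ?thesis unfolding FE_def H_def cart_edge_iff using that VX_def by simp
  qed
  have parpre: "preL L q mod 2 \<noteq> q mod 2" if "q < L" for q
    using even_preL[OF L(1) that] L by auto
  have pm: "perfect_matching H M2"
    unfolding perfect_matching_def
  proof (intro conjI ballI)
    show "M2 \<subseteq> edges H" unfolding M2_def using FEedge by auto
  next
    fix v assume v: "v \<in> verts H"
    obtain x q where xq: "v = (x,q)" "x \<in> VX" "q < L" using v vH by (cases v) auto
    define E0 where "E0 = (if q mod 2 = ii c x then FE L x q else FE L x (preL L q))"
    show "\<exists>!e. e \<in> M2 \<and> v \<in> e"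
    proof (rule ex1I[of _ E0])
      show "E0 \<in> M2 \<and> v \<in> E0"
      proof (cases "q mod 2 = ii c x")
        case True
        then show ?thesis unfolding E0_def M2_def FE_def xq using xq by force
      next
        case False
        then have "preL L q mod 2 = ii c x" using parpre[OF xq(3)] ii2[of x] by auto
        moreover have "preL L q < L" using preL_lt[OF xq(3)] .
        ultimately have "E0 \<in> M2" unfolding E0_def M2_def using False xq by force
        moreover have "v \<in> E0" unfolding E0_def FE_def xq using False sucL_preL[OF xq(3)] by simp
        ultimately show ?thesis by blast
      qed
    next
      fix e assume e: "e \<in> M2 \<and> v \<in> e"
      then obtain x' q' where e': "e = FE L x' q'" "x' \<in> VX" "q' < L" "q' mod 2 = ii c x'" unfolding M2_def by auto
      have "(x,q) \<in> FE L x' q'" using e e' xq by simp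
      then have xx: "x' = x" and qq: "q = q' \<or> q = sucL L q'" unfolding FE_def by auto
      show "e = E0"
      proof (cases "q = q'")
        case True then show ?thesis unfolding E0_def e' using xx e'(4) by simp
      next
        case False
        then have "q = sucL L q'" using qq by simp
        then have q': "q' = preL L q" using sucL_preL_iff[OF xq(3) e'(3)] by simp
        then have "q mod 2 \<noteq> ii c x" using parpre[OF xq(3)] e'(4) xx by simp
        then show ?thesis unfolding E0_def e' using xx q' by simp
      qed
    qed
  qed
  have SM: "S2 \<subseteq> M2"
  proof
    fix e assume "e \<in> S2"
    then obtain x where x: "x \<in> VX" "e = FE L x (ii c x)" unfolding S2_def by blast
    have "ii c x < L" using ii2(1)[of x] L by simp
    then have "(x, ii c x) \<in> {(x,q). x \<in> VX \<and> q < L \<and> q mod 2 = ii c x}" using x ii2(2)[of x] by simp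
    then show "e \<in> M2" unfolding M2_def x(2) by (rule image_eqI[rotated]) simp
  qed
  have fs: "forcing_set H M2 S2"
    unfolding forcing_set_def
  proof (intro conjI allI impI)
    show "S2 \<subseteq> M2" by (rule SM)
  next
    fix M' assume M': "perfect_matching H M' \<and> S2 \<subseteq> M'"
    have uniq: "e1 = e2" if "e1 \<in> M'" "e2 \<in> M'" "v \<in> e1" "v \<in> e2" "v \<in> verts H" for e1 e2 v
      using pmD(2)[of H M' v] M' that by blast
    have main: "\<forall>x\<in>VX. j mod 2 = ii c x \<longrightarrow> FE L x j \<in> M'" if "2 \<le> j" "j < L" for j
      using that
    proof (induction j rule: less_induct)
      case (less j)
      have helper: "FE L y q \<in> M'" if "y \<in> VX" "q < j" "q mod 2 = ii c y" for y q
      proof (cases "2 \<le> q")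
        case True
        then show ?thesis using less.IH[OF that(2) True] less.prems that by auto
      next
        case False
        then have "q = ii c y" using that(3) by auto
        then have "FE L y q \<in> S2" unfolding S2_def using that(1) by blast
        then show ?thesis using M' by blast
      qed
      show ?case
      proof (intro ballI impI)
        fix x assume x: "x \<in> VX" and jx: "j mod 2 = ii c x"
        have vV: "(x,j) \<in> verts H" using x less.prems vH by simp
        obtain e' where e': "e' \<in> M'" "(x,j) \<in> e'" using pmD(2)[of H M' "(x,j)"] M' vV by blast
        have eH: "e' \<in> edges H" using e' M' pmD(1) by blast
        have "card e' = 2" using simple_graphD(3)[OF sgH eH] .
        then obtain w where w: "w \<noteq> (x,j)" "e' = {(x,j), w}" using card2_elem e'(2) by metis
        have wV: "w \<in> verts H" using simple_graphD(2)[OF sgH eH] w by blast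
        obtain y q where yq: "w = (y,q)" "y \<in> VX" "q < L" using wV vH by (cases w) auto
        have "{(x,j),(y,q)} \<in> edges (cart X (cycle L))" using eH w yq H_def by simp
        then have "(x = y \<and> x \<in> verts X \<and> {j,q} \<in> edges (cycle L)) \<or> (j = q \<and> j \<in> verts (cycle L) \<and> {x,y} \<in> edges X)"
          by (simp only: cart_edge_iff)
        then have cases: "(x = y \<and> (q = sucL L j \<or> q = preL L j)) \<or> (j = q \<and> {x,y} \<in> edges X)"
          using cycle_adj_iff[OF less.prems(2) yq(3)] by blast
        have j1: "preL L j = j - 1" "sucL L (j - 1) = j" "sucL L (j - 2) = j - 1"
          using less.prems unfolding preL_def sucL_def by auto
        show "FE L x j \<in> M'"
        proof (cases "x = y \<and> q = sucL L j")
          case True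
          then have "e' = FE L x j" unfolding FE_def w yq by simp
          then show ?thesis using e' by simp
        next
          case False
          show ?thesis
          proof (cases "x = y")
            case True
            have "{x} \<notin> edges X" using simple_graphD(3)[OF sgX, of "{x}"] by auto
            then have q: "q = j - 1" using cases False j1 True by auto
            have "(j - 2) mod 2 = ii c x" using jx less.prems by (simp add: mod2_eq_if)
            then have inM: "FE L x (j - 2) \<in> M'" using helper[OF x, of "j - 2"] less.prems by simp
            have "w \<in> FE L x (j - 2)" unfolding FE_def yq q True j1 by simp
            then have "e' = FE L x (j - 2)" using uniq[OF e'(1) inM _ _ wV] w by blast
            then have "(x,j) \<in> FE L x (j - 2)" using e' by simp
            then show ?thesis unfolding FE_def j1 using less.prems by auto
          next
            case False
            then have jq: "j = q" and exy: "{x,y} \<in> edges X" using cases by auto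
            have "ii c y \<noteq> ii c x" using col exy unfolding ii_def by auto
            then have "(j - 1) mod 2 = ii c y" using jx less.prems ii2[of x] ii2[of y] by (simp add: mod2_eq_if split: if_splits)
            then have inM: "FE L y (j - 1) \<in> M'" using helper[OF yq(2), of "j - 1"] less.prems by simp
            have "w \<in> FE L y (j - 1)" unfolding FE_def yq jq[symmetric] j1 by simp
            then have "e' = FE L y (j - 1)" using uniq[OF e'(1) inM _ _ wV] w by blast
            then have "(x,j) \<in> FE L y (j - 1)" using e' by simp
            then have "x = y" unfolding FE_def j1 using less.prems by auto
            then show ?thesis using False by simp
          qed
        qed
      qed
    qed
    have "M2 \<subseteq> M'"
    proof
      fix e assume "e \<in> M2"
      then obtain x q where e: "e = FE L x q" "x \<in> VX" "q < L" "q mod 2 = ii c x" unfolding M2_def by auto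
      show "e \<in> M'"
      proof (cases "2 \<le> q")
        case True then show ?thesis using main[OF True e(3)] e by blast
      next
        case False
        then have "q = ii c x" using e(4) by auto
        then have "e \<in> S2" unfolding S2_def using e by blast
        then show ?thesis using M' by blast
      qed
    qed
    then show "M' = M2" using pm_sub_eq[OF sgH pm] M' by blast
  qed
  show ?thesis using pm fs unfolding H_def M2_def S2_def VX_def by simp
qed



lemma fn_attained:
  assumes sg: "simple_graph H" and pm0: "perfect_matching H M0"
  shows "\<exists>M S. perfect_matching H M \<and> forcing_set H M S \<and> card S = forcing_number H"
proof -
  have "\<exists>M. perfect_matching H M \<and> forcing_number_of H M = forcing_number H"
    unfolding forcing_number_def by (rule LeastI[of _ "forcing_number_of H M0"]) (use pm0 in blast)
  then obtain M where M: "perfect_matching H M" "forcing_number_of H M = forcing_number H" by blast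
  have fsM: "forcing_set H M M"
    unfolding forcing_set_def using pm_sub_eq[OF sg M(1)] by blast
  have "\<exists>S. forcing_set H M S \<and> card S = forcing_number_of H M"
    unfolding forcing_number_of_def by (rule LeastI[of _ "card M"]) (use fsM in blast)
  then show ?thesis using M by metis
qed

lemma four_elems:
  assumes "infinite (UNIV :: 'f set) \<or> card (UNIV :: 'f set) \<ge> 4"
  shows "\<exists>T :: 'f set. finite T \<and> card T = 4"
proof (cases "finite (UNIV :: 'f set)")
  case True
  then have "card (UNIV :: 'f set) \<ge> 4" using assms by simp
  then obtain T :: "'f set" where "card T = 4" "finite T" by (rule obtain_subset_with_card_n)
  then show ?thesis by blast
next
  case False
  then show ?thesis using infinite_arbitrarily_large[OF False, of 4] by blast
qed

lemma good_a:
  assumes "infinite (UNIV :: 'f::field set) \<or> card (UNIV :: 'f set) \<ge> 4"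
  shows "\<exists>a :: 'f. a \<noteq> 0 \<and> 1 - a * a \<noteq> 0"
proof -
  obtain T :: "'f set" where T: "finite T" "card T = 4" using four_elems[OF assms] by blast
  have "card {0, 1, -1 :: 'f} \<le> 3" by (auto simp: card_insert_if)
  then have "card T - card {0, 1, -1 :: 'f} \<ge> 1" using T by simp
  then have "card (T - {0, 1, -1}) \<ge> 1" using diff_card_le_card_Diff[of "{0, 1, -1 :: 'f}" T] by simp
  then obtain a where a: "a \<in> T - {0, 1, -1}" by (metis card.empty ex_in_conv not_one_le_zero)
  have "1 - a * a = (1 - a) * (1 + a)" by (simp add: algebra_simps)
  moreover have "1 - a \<noteq> 0" "1 + a \<noteq> 0" using a by (auto simp: add_eq_0_iff)
  ultimately show ?thesis using a by auto
qed

lemma good_t: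
  assumes "infinite (UNIV :: 'f::field set) \<or> card (UNIV :: 'f set) \<ge> 4"
    and L: "even L" "L \<ge> 4"
  shows "\<exists>t :: nat \<Rightarrow> 'f. (\<forall>p<L. t (preL L p) \<noteq> t p \<and> t p \<noteq> t (sucL L p) \<and> t (preL L p) \<noteq> t (sucL L p)) \<and> t 0 \<noteq> t 1"
proof -
  obtain T :: "'f set" where T: "finite T" "card T = 4" using four_elems[OF assms(1)] by blast
  obtain h :: "nat \<Rightarrow> 'f" where h: "bij_betw h {0..<4} T" using ex_bij_betw_nat_finite[OF T(1)] T(2) by metis
  have hi: "inj_on h {0..<4}" using h bij_betw_def by blast
  have neq: "h i \<noteq> h j" if "i < 4" "j < 4" "i \<noteq> j" for i j
  proof
    assume "h i = h j"
    moreover have "i \<in> {0..<4}" "j \<in> {0..<4}" using that by auto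
    ultimately have "i = j" using inj_onD[OF hi] by blast
    then show False using that by simp
  qed
  define t where "t p = h (cc L p)" for p
  have "\<forall>p<L. t (preL L p) \<noteq> t p \<and> t p \<noteq> t (sucL L p) \<and> t (preL L p) \<noteq> t (sucL L p)"
    unfolding t_def using cc_ok[OF L] neq cc_lt by blast
  moreover have "t 0 \<noteq> t 1" unfolding t_def using cc_01[OF L(2,1)] neq cc_lt by blast
  ultimately show ?thesis by blast
qed

theorem corollary2p2:
  fixes G :: "'a graph"
  assumes "simple_graph G"
    and "bipartite G"
    and "infinite (UNIV :: 'f::field set) \<or> card (UNIV :: 'f set) \<ge> 4"
    and "(invol_adj G :: ('a \<Rightarrow> 'a \<Rightarrow> 'f) set) \<noteq> {}"
  shows "\<forall>d::nat. d \<ge> 1 \<longrightarrow>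
     (invol_adj (cart G (hypercube d)) :: ('a \<times> bool list \<Rightarrow> 'a \<times> bool list \<Rightarrow> 'f) set) \<noteq> {} \<and>
     real (forcing_number (cart G (hypercube d))) = 2 powi (int d - 2) * real (card (verts G)) \<and>
     (\<forall>k::nat. k \<ge> 2 \<longrightarrow>
        forcing_number (cart (cart G (hypercube d)) (cycle (2 * k))) = 2 ^ d * card (verts G))"
proof (intro allI impI)
  fix d :: nat assume d1: "d \<ge> 1"
  note sg = assms(1) and bip = assms(2) and fsz = assms(3)
  obtain A :: "'a \<Rightarrow> 'a \<Rightarrow> 'f" where A: "A \<in> invol_adj G" using assms(4) by blast
  obtain a :: 'f where a: "a \<noteq> 0" "1 - a * a \<noteq> 0" using good_a[OF fsz] by blast
  define V where "V = verts G"
  define n where "n = card V"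
  have finV: "finite V" using sg unfolding simple_graph_def V_def by simp
  obtain c :: "'a \<Rightarrow> bool" where c: "\<forall>u v. {u,v} \<in> edges G \<longrightarrow> c u \<noteq> c v" using bip_col[OF bip sg] by blast
  have KX: "KM V A a d \<in> invol_adj (cart G (hypercube d))"
    unfolding V_def by (rule KM_invol_adj[OF sg A a])
  then have P1: "(invol_adj (cart G (hypercube d)) :: ('a \<times> bool list \<Rightarrow> 'a \<times> bool list \<Rightarrow> 'f) set) \<noteq> {}" by blast
  obtain d' where d': "d = Suc d'" using d1 by (cases d) auto
  have sgX: "simple_graph (cart G (hypercube d))" by (rule simple_cart[OF sg simple_hyp])
  have nc: "\<forall>u v. {u,v} \<in> edges G \<longrightarrow> (\<not> c u) \<noteq> (\<not> c v)" using c by blast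
  have U_c: "perfect_matching (cart G (hypercube (Suc d'))) (pr1 ` (verts G \<times> {ys. length ys = d'}))
     \<and> forcing_set (cart G (hypercube (Suc d'))) (pr1 ` (verts G \<times> {ys. length ys = d'}))
         (pr1 ` {z \<in> verts G \<times> {ys. length ys = d'}. c (fst z) \<noteq> par (snd z)})"
    by (rule upper_d[OF sg c])
  have U_nc: "perfect_matching (cart G (hypercube (Suc d'))) (pr1 ` (verts G \<times> {ys. length ys = d'}))
     \<and> forcing_set (cart G (hypercube (Suc d'))) (pr1 ` (verts G \<times> {ys. length ys = d'}))
         (pr1 ` {z \<in> verts G \<times> {ys. length ys = d'}. (\<not> c (fst z)) \<noteq> par (snd z)})"
    using upper_d[OF sg nc] by simp
  have split: "card (pr1 ` {z \<in> verts G \<times> {ys. length ys = d'}. c (fst z) \<noteq> par (snd z)})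
       + card (pr1 ` {z \<in> verts G \<times> {ys. length ys = d'}. (\<not> c (fst z)) \<noteq> par (snd z)}) = n * 2 ^ d'"
    using card_S1_split[OF finV, where c = c and d = d'] unfolding V_def n_def by simp
  have up: "2 * forcing_number (cart G (hypercube d)) \<le> n * 2 ^ d'"
    unfolding d' using fn_le[OF conjunct1[OF U_c] conjunct2[OF U_c]] fn_le[OF conjunct1[OF U_nc] conjunct2[OF U_nc]] split
    by linarith
  obtain M S where MS: "perfect_matching (cart G (hypercube d)) M" "forcing_set (cart G (hypercube d)) M S"
      "card S = forcing_number (cart G (hypercube d))"
    using fn_attained[OF sgX] U_c d' by blast
  have low: "n * 2 ^ d' \<le> 2 * forcing_number (cart G (hypercube d))"
    using lower_d[OF sg bip A a, of d' M S] MS d' unfolding n_def V_def by simp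
  have eq: "2 * forcing_number (cart G (hypercube d)) = n * 2 ^ d'" using up low by simp
  have e1: "real (forcing_number (cart G (hypercube d))) = real n * 2 ^ d' / 2"
    using arg_cong[OF eq, of real] by simp
  have e2: "(2::real) powi (int d - 2) = 2 ^ d' / 2"
  proof -
    have "int d - 2 = int d' - 1" using d' by simp
    then show ?thesis by (simp add: power_int_diff)
  qed
  have P2: "real (forcing_number (cart G (hypercube d))) = 2 powi (int d - 2) * real (card (verts G))"
    unfolding e1 e2 n_def V_def by simp
  have P3: "\<forall>k::nat. k \<ge> 2 \<longrightarrow> forcing_number (cart (cart G (hypercube d)) (cycle (2 * k))) = 2 ^ d * card (verts G)"
  proof (intro allI impI)
    fix k :: nat assume k: "k \<ge> 2"
    define L where "L = 2 * k"
    have L: "even L" "L \<ge> 4" using k L_def by auto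
    define X where "X = cart G (hypercube d)"
    have cX: "\<forall>u v. {u,v} \<in> edges X \<longrightarrow> (\<lambda>(g,xs). c g \<noteq> par xs) u \<noteq> (\<lambda>(g,xs). c g \<noteq> par xs) v"
      unfolding X_def by (rule cart_hyp_col[OF c])
    define \<iota> where "\<iota> = (\<lambda>(g,xs). c g \<noteq> par xs)"
    have cX': "\<forall>u v. {u,v} \<in> edges X \<longrightarrow> \<iota> u \<noteq> \<iota> v" using cX unfolding \<iota>_def .
    have sgX': "simple_graph X" using sgX X_def by simp
    obtain t :: "nat \<Rightarrow> 'f" where t: "\<forall>p<L. t (preL L p) \<noteq> t p \<and> t p \<noteq> t (sucL L p) \<and> t (preL L p) \<noteq> t (sucL L p)" "t 0 \<noteq> t 1"
      using good_t[OF fsz L] by blast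
    have UC: "perfect_matching (cart X (cycle L)) ((\<lambda>(x,q). FE L x q) ` {(x,q). x \<in> verts X \<and> q < L \<and> q mod 2 = ii \<iota> x})
      \<and> forcing_set (cart X (cycle L)) ((\<lambda>(x,q). FE L x q) ` {(x,q). x \<in> verts X \<and> q < L \<and> q mod 2 = ii \<iota> x})
         ((\<lambda>x. FE L x (ii \<iota> x)) ` verts X)"
      by (rule upper_cycle[OF sgX' cX' L])
    have finVX: "finite (verts X)" using sgX' unfolding simple_graph_def by simp
    have "forcing_number (cart X (cycle L)) \<le> card ((\<lambda>x. FE L x (ii \<iota> x)) ` verts X)"
      using fn_le[OF conjunct1[OF UC] conjunct2[OF UC]] .
    also have "\<dots> \<le> card (verts X)" by (rule card_image_le[OF finVX])
    finally have up2: "forcing_number (cart X (cycle L)) \<le> card (verts X)" .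
    have sgH: "simple_graph (cart X (cycle L))" using simple_cart[OF sgX' simple_cycle] L by simp
    obtain M S where MS: "perfect_matching (cart X (cycle L)) M" "forcing_set (cart X (cycle L)) M S"
        "card S = forcing_number (cart X (cycle L))"
      using fn_attained[OF sgH conjunct1[OF UC]] by blast
    have KX': "KM V A a d \<in> invol_adj X" using KX X_def by simp
    have low2: "card (verts X) \<le> forcing_number (cart X (cycle L))"
      using lower_cycle[OF sgX' cX' KX' L t(1) t(2) MS(1) MS(2)] MS(3) by simp
    have "card (verts X) = 2 ^ d * card (verts G)"
      unfolding X_def by (simp add: card_cartesian_product card_Ld)
    then show "forcing_number (cart (cart G (hypercube d)) (cycle (2 * k))) = 2 ^ d * card (verts G)"
      using up2 low2 unfolding X_def L_def by simp
  qed
  show "(invol_adj (cart G (hypercube d)) :: ('a \<times> bool list \<Rightarrow> 'a \<times> bool list \<Rightarrow> 'f) set) \<noteq> {} \<and>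
     real (forcing_number (cart G (hypercube d))) = 2 powi (int d - 2) * real (card (verts G)) \<and>
     (\<forall>k::nat. k \<ge> 2 \<longrightarrow>
        forcing_number (cart (cart G (hypercube d)) (cycle (2 * k))) = 2 ^ d * card (verts G))"
    using P1 P2 P3 by blast
qed

end
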